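(* Let $G$ be a domain in $\mathbb{C}^n$ and let $E$ be a pluripolar subset of $G$. Assume $u$ is a plurisubharmonic function on $G$ such that $Z=\{z\in G:u(z)=-\infty\}\supset E$ and $u$ is locally bounded on $G\setminus Z$. Then for every domain $D\Subset G$ and every open set $U\supset Z$, $$\omega(z,E\cap D,D)=\omega(z,E\cap D,U\cap D),\qquad z\in U\cap D.$$
   Context: For an open set $\Omega\subset\mathbb{C}^n$ and $E\subset\Omega$, the relative extremal function (pluriharmonic measure) is $\omega(z,E,\Omega)=-\sup\{v(z): v \text{ plurisubharmonic on }\Omega,\ v\le-1\text{ on }E,\ v\le0\text{ on }\Omega\}$, $z\in\Omega$ (for disconnected $\Omega$ this is computed on each connected component separately). *)

theory Defs
  imports "HOL-Analysis.Analysis"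
begin

text \<open>Points of C^n are modelled as complex ^ 'n with 'n a finite index type.
  Functions take values in ereal (value +\<infinity> excluded for psh functions).\<close>

definition usc_on :: "'a::topological_space set \<Rightarrow> ('a \<Rightarrow> ereal) \<Rightarrow> bool" where
  "usc_on S u \<longleftrightarrow> (\<forall>x\<in>S. \<forall>c. u x < c \<longrightarrow> (\<forall>\<^sub>F y in at x within S. u y < c))"

definition circ_pt :: "complex^'n \<Rightarrow> complex^'n \<Rightarrow> real \<Rightarrow> complex^'n" where
  "circ_pt a b t = (\<chi> i. a $ i + cis t * b $ i)"

definition circle_mean :: "(complex^'n \<Rightarrow> ereal) \<Rightarrow> complex^'n \<Rightarrow> complex^'n \<Rightarrow> ereal" where
  "circle_mean u a b =
     (enn2ereal (\<integral>\<^sup>+ t. e2ennreal (u (circ_pt a b t)) * indicator {0..2*pi} t \<partial>lborel)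
      - enn2ereal (\<integral>\<^sup>+ t. e2ennreal (- u (circ_pt a b t)) * indicator {0..2*pi} t \<partial>lborel))
     / ereal (2*pi)"

text \<open>Plurisubharmonic functions on an open set \<Omega>: upper semicontinuous, < +\<infinity>,
  and sub-mean-value property on every closed complex disc {a + \<zeta> b : |\<zeta>| \<le> 1} in \<Omega>
  (i.e. subharmonic, or identically -\<infinity>, on each complex line).\<close>
definition psh :: "(complex^'n) set \<Rightarrow> (complex^'n \<Rightarrow> ereal) \<Rightarrow> bool" where
  "psh \<Omega> u \<longleftrightarrow> open \<Omega> \<and> usc_on \<Omega> u \<and> (\<forall>z\<in>\<Omega>. u z < \<infinity>) \<and>
     (\<forall>a b. (\<forall>\<zeta>::complex. cmod \<zeta> \<le> 1 \<longrightarrow> (\<chi> i. a $ i + \<zeta> * b $ i) \<in> \<Omega>)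
        \<longrightarrow> u a \<le> circle_mean u a b)"

definition pluripolar :: "(complex^'n) set \<Rightarrow> bool" where
  "pluripolar E \<longleftrightarrow> (\<forall>a\<in>E. \<exists>r>0. \<exists>v. psh (ball a r) v \<and> (\<exists>z\<in>ball a r. v z \<noteq> -\<infinity>)
                         \<and> (\<forall>x\<in>E \<inter> ball a r. v x = -\<infinity>))"

text \<open>Relative extremal function \<omega>(z,E,\<Omega>).  Since psh is a local notion, the
  supremum over psh functions on \<Omega> is automatically computed componentwise.\<close>
definition rel_extremal :: "complex^'n \<Rightarrow> (complex^'n) set \<Rightarrow> (complex^'n) set \<Rightarrow> ereal" where
  "rel_extremal z E \<Omega> =
     - (SUP v \<in> {v. psh \<Omega> v \<and> (\<forall>x\<in>E. v x \<le> -1) \<and> (\<forall>x\<in>\<Omega>. v x \<le> 0)}. v z)"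

end

theory Submission
  imports Defs
begin

definition tmean :: "(real \<Rightarrow> ereal) \<Rightarrow> ereal" where
  "tmean F = (enn2ereal (\<integral>\<^sup>+ t. e2ennreal (F t) * indicator {0..2*pi} t \<partial>lborel)
      - enn2ereal (\<integral>\<^sup>+ t. e2ennreal (- F t) * indicator {0..2*pi} t \<partial>lborel)) / ereal (2*pi)"

lemma circle_mean_tmean: "circle_mean u a b = tmean (\<lambda>t. u (circ_pt a b t))"
  by (simp add: circle_mean_def tmean_def)

lemma tmean_mono:
  assumes "\<And>t. t \<in> {0..2*pi} \<Longrightarrow> F t \<le> G t"
  shows "tmean F \<le> tmean G"
proof -
  have 1: "(\<integral>\<^sup>+ t. e2ennreal (F t) * indicator {0..2*pi} t \<partial>lborel) \<le> (\<integral>\<^sup>+ t. e2ennreal (G t) * indicator {0..2*pi} t \<partial>lborel)"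
    by (rule nn_integral_mono) (auto simp: indicator_def intro!: e2ennreal_mono assms)
  have 2: "(\<integral>\<^sup>+ t. e2ennreal (- G t) * indicator {0..2*pi} t \<partial>lborel) \<le> (\<integral>\<^sup>+ t. e2ennreal (- F t) * indicator {0..2*pi} t \<partial>lborel)"
    by (rule nn_integral_mono) (auto simp: indicator_def intro!: e2ennreal_mono assms)
  show ?thesis unfolding tmean_def
    apply (rule ereal_divide_right_mono)
    apply (rule ereal_minus_mono)
    using 1 2 by (auto simp: less_eq_ennreal.rep_eq)
qed

lemma tmean_cong:
  assumes "\<And>t. t \<in> {0..2*pi} \<Longrightarrow> F t = G t"
  shows "tmean F = tmean G"
  using tmean_mono[of F G] tmean_mono[of G F] assms by (metis order.eq_iff order_refl)

lemma emeasure_02pi: "emeasure lborel {0..2*pi} = ennreal (2*pi)"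
  by simp

lemma tmean_repr:
  assumes meas: "F \<in> borel_measurable borel" and B: "\<And>t. t \<in> {0..2*pi} \<Longrightarrow> F t \<le> ereal B" and B0: "0 \<le> B"
  shows "tmean F = ereal B - enn2ereal (\<integral>\<^sup>+ t. e2ennreal (ereal B - F t) * indicator {0..2*pi} t \<partial>lborel) / ereal (2*pi)"
proof -
  define I where "I = (indicator {0..2*pi} :: real \<Rightarrow> ennreal)"
  define P where "P = (\<integral>\<^sup>+ t. e2ennreal (F t) * I t \<partial>lborel)"
  define N where "N = (\<integral>\<^sup>+ t. e2ennreal (- F t) * I t \<partial>lborel)"
  define Q where "Q = (\<integral>\<^sup>+ t. e2ennreal (ereal B - F t) * I t \<partial>lborel)"
  have pw: "e2ennreal (ereal B - F t) * I t + e2ennreal (F t) * I t = ennreal B * I t + e2ennreal (- F t) * I t" for t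
  proof (cases "t \<in> {0..2*pi}")
    case False thus ?thesis by (simp add: I_def)
  next
    case True
    hence IT: "I t = 1" by (simp add: I_def)
    have le: "F t \<le> ereal B" using B True by auto
    show ?thesis
    proof (cases "F t")
      case (real r)
      show ?thesis
      proof (cases "r \<ge> 0")
        case True
        thus ?thesis using real le IT B0 by (simp add: ennreal_plus[symmetric] ennreal_neg)
      next
        case False
        thus ?thesis using real le IT B0 by (simp add: ennreal_plus[symmetric] ennreal_neg)
      qed
    next
      case PInf thus ?thesis using le by simp
    next
      case MInf thus ?thesis using IT by simp
    qed
  qed
  have mI: "I \<in> borel_measurable borel" unfolding I_def by simp
  have "Q + P = (\<integral>\<^sup>+ t. e2ennreal (ereal B - F t) * I t + e2ennreal (F t) * I t \<partial>lborel)"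
    unfolding Q_def P_def using meas mI by (intro nn_integral_add[symmetric]) auto
  also have "\<dots> = (\<integral>\<^sup>+ t. ennreal B * I t + e2ennreal (- F t) * I t \<partial>lborel)"
    using pw by simp
  also have "\<dots> = (\<integral>\<^sup>+ t. ennreal B * I t \<partial>lborel) + N"
    unfolding N_def using meas mI by (intro nn_integral_add) auto
  also have "(\<integral>\<^sup>+ t. ennreal B * I t \<partial>lborel) = ennreal (2*pi*B)"
    unfolding I_def using B0 by (simp add: nn_integral_cmult ennreal_mult' mult.commute)
  finally have eq: "Q + P = ennreal (2*pi*B) + N" .
  have "P \<le> (\<integral>\<^sup>+ t. ennreal B * I t \<partial>lborel)"
    unfolding P_def
    by (rule nn_integral_mono) (auto simp: I_def indicator_def B intro: e2ennreal_mono[of _ "ereal B", simplified])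
  also have "(\<integral>\<^sup>+ t. ennreal B * I t \<partial>lborel) = ennreal (2*pi*B)"
    unfolding I_def using B0 by (simp add: nn_integral_cmult ennreal_mult' mult.commute)
  finally have Pfin: "P \<le> ennreal (2*pi*B)" .
  then obtain p where p: "P = ennreal p" "0 \<le> p" by (metis ennreal_cases ennreal_less_top linorder_not_less top.not_eq_extremum top_unique)
  have tm: "tmean F = (enn2ereal P - enn2ereal N) / ereal (2*pi)"
    unfolding tmean_def P_def N_def I_def by simp
  show ?thesis
  proof (cases "N = top")
    case True
    hence "Q = top" using eq p by (simp add: ennreal_add_eq_top)
    thus ?thesis using True tm p unfolding Q_def I_def by simp
  next
    case False
    then obtain n where n: "N = ennreal n" "0 \<le> n" by (metis ennreal_cases)
    have "Q \<noteq> top" using eq n p by (metis ennreal_add_eq_top ennreal_neq_top)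
    then obtain q where q: "Q = ennreal q" "0 \<le> q" by (metis ennreal_cases)
    have "ennreal (q + p) = ennreal (2*pi*B + n)" using eq p q n B0 by (simp add: ennreal_plus)
    hence qp: "q + p = 2*pi*B + n" using p q n B0 by (subst (asm) ennreal_inj) auto
    have "tmean F = ereal ((p - n) / (2*pi))" using tm p n by simp
    also have "\<dots> = ereal (B - q / (2*pi))" using qp by (simp add: field_simps)
    also have "\<dots> = ereal B - enn2ereal Q / ereal (2*pi)" using q by simp
    finally show ?thesis unfolding Q_def I_def .
  qed
qed

lemma le_ereal_trans: "x \<le> ereal a \<Longrightarrow> a \<le> b \<Longrightarrow> x \<le> ereal b"
  by (metis ereal_less_eq(3) order_trans)

lemma tmean_add_const:
  assumes meas: "F \<in> borel_measurable borel" and B: "\<And>t. t \<in> {0..2*pi} \<Longrightarrow> F t \<le> ereal B"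
  shows "tmean (\<lambda>t. F t + ereal c) = tmean F + ereal c"
proof -
  define B0 where "B0 = max B 0 + \<bar>c\<bar>"
  define Q where "Q = enn2ereal (\<integral>\<^sup>+ t. e2ennreal (ereal B0 - F t) * indicator {0..2*pi} t \<partial>lborel)"
  have 1: "tmean F = ereal B0 - Q / ereal (2*pi)"
    unfolding Q_def apply (rule tmean_repr[OF meas])
    subgoal for t by (rule le_ereal_trans[OF B]) (auto simp: B0_def)
    by (auto simp: B0_def)
  have "tmean (\<lambda>t. F t + ereal c) = ereal (B0 + c) - enn2ereal (\<integral>\<^sup>+ t. e2ennreal (ereal (B0 + c) - (F t + ereal c)) * indicator {0..2*pi} t \<partial>lborel) / ereal (2*pi)"
  proof (rule tmean_repr)
    show "(\<lambda>t. F t + ereal c) \<in> borel_measurable borel" using meas by measurable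
    show "F t + ereal c \<le> ereal (B0 + c)" if "t \<in> {0..2*pi}" for t
      using B[OF that] by (cases "F t") (auto simp: B0_def)
    show "0 \<le> B0 + c" by (auto simp: B0_def)
  qed
  also have "(\<lambda>t. ereal (B0 + c) - (F t + ereal c)) = (\<lambda>t. ereal B0 - F t)"
    by (rule ext, case_tac "F t") auto
  finally have 2: "tmean (\<lambda>t. F t + ereal c) = ereal (B0 + c) - Q / ereal (2*pi)" unfolding Q_def .
  have Q0: "Q \<ge> 0" unfolding Q_def by simp
  show ?thesis unfolding 1 2 using Q0 by (cases "Q") auto
qed

lemma tmean_scale:
  assumes meas: "F \<in> borel_measurable borel" and B: "\<And>t. t \<in> {0..2*pi} \<Longrightarrow> F t \<le> ereal B"
    and e: "0 < e"
  shows "tmean (\<lambda>t. ereal e * F t) = ereal e * tmean F"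
proof -
  define B0 where "B0 = max B 0"
  define Q where "Q = (\<integral>\<^sup>+ t. e2ennreal (ereal B0 - F t) * indicator {0..2*pi} t \<partial>lborel)"
  have 1: "tmean F = ereal B0 - enn2ereal Q / ereal (2*pi)"
    unfolding Q_def apply (rule tmean_repr[OF meas])
    subgoal for t by (rule le_ereal_trans[OF B]) (auto simp: B0_def)
    by (auto simp: B0_def)
  have "tmean (\<lambda>t. ereal e * F t) = ereal (e * B0) - enn2ereal (\<integral>\<^sup>+ t. e2ennreal (ereal (e*B0) - ereal e * F t) * indicator {0..2*pi} t \<partial>lborel) / ereal (2*pi)"
  proof (rule tmean_repr)
    show "(\<lambda>t. ereal e * F t) \<in> borel_measurable borel" using meas by measurable
    show "ereal e * F t \<le> ereal (e * B0)" if "t \<in> {0..2*pi}" for t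
      using B[OF that] e by (cases "F t") (auto simp: B0_def intro: mult_left_mono)
    show "0 \<le> e * B0" using e by (auto simp: B0_def)
  qed
  also have "(\<lambda>t. e2ennreal (ereal (e*B0) - ereal e * F t) * indicator {0..2*pi} t) = (\<lambda>t. ennreal e * (e2ennreal (ereal B0 - F t) * indicator {0..2*pi} t))"
  proof (rule ext)
    fix t
    have "e2ennreal (ereal (e*B0) - ereal e * F t) = ennreal e * e2ennreal (ereal B0 - F t)"
    proof (cases "F t")
      case (real r)
      show ?thesis
      proof (cases "r \<le> B0")
        case True thus ?thesis using real e by (simp add: ennreal_mult'[symmetric] right_diff_distrib)
      next
        case False thus ?thesis using real e by (simp add: ennreal_neg)
      qed
    qed (use e in \<open>auto simp: e2ennreal_neg\<close>)
    thus "e2ennreal (ereal (e*B0) - ereal e * F t) * indicator {0..2*pi} t = ennreal e * (e2ennreal (ereal B0 - F t) * indicator {0..2*pi} t)"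
      by (simp add: mult.assoc)
  qed
  also have "(\<integral>\<^sup>+ t. ennreal e * (e2ennreal (ereal B0 - F t) * indicator {0..2*pi} t) \<partial>lborel) = ennreal e * Q"
    unfolding Q_def using meas by (intro nn_integral_cmult) auto
  also have "enn2ereal (ennreal e * Q) = ereal e * enn2ereal Q"
    using e by (simp add: times_ennreal.rep_eq)
  finally have 2: "tmean (\<lambda>t. ereal e * F t) = ereal (e * B0) - ereal e * enn2ereal Q / ereal (2*pi)" .
  have Q0: "enn2ereal Q \<ge> 0" by simp
  show ?thesis unfolding 1 2 using Q0 e by (cases "enn2ereal Q") (auto simp: field_simps)
qed

lemma tmean_real:
  fixes g :: "real \<Rightarrow> real"
  assumes meas: "g \<in> borel_measurable borel" and K: "\<And>t. t \<in> {0..2*pi} \<Longrightarrow> \<bar>g t\<bar> \<le> K"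
  shows "tmean (\<lambda>t. ereal (g t)) = ereal ((LINT t:{0..2*pi}|lborel. g t) / (2*pi))"
proof -
  have K0: "0 \<le> K" using K[of 0] by auto
  have sig: "set_integrable lborel {0..2*pi} g"
    unfolding set_integrable_def
    by (rule integrableI_bounded_set_indicator[where B=K]) (use meas K in auto)
  have sik: "set_integrable lborel {0..2*pi} (\<lambda>t. K - g t)"
    using sig by (intro set_integral_diff) (auto simp: set_integrable_def intro!: integrable_real_mult_indicator)
  have "tmean (\<lambda>t. ereal (g t)) = ereal K - enn2ereal (\<integral>\<^sup>+ t. e2ennreal (ereal K - ereal (g t)) * indicator {0..2*pi} t \<partial>lborel) / ereal (2*pi)"
    by (rule tmean_repr) (use meas K K0 in \<open>auto intro: abs_le_D1\<close>)
  also have "(\<integral>\<^sup>+ t. e2ennreal (ereal K - ereal (g t)) * indicator {0..2*pi} t \<partial>lborel) = (\<integral>\<^sup>+ t. ennreal (indicator {0..2*pi} t *\<^sub>R (K - g t)) \<partial>lborel)"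
    by (intro nn_integral_cong) (auto simp: indicator_def)
  also have "\<dots> = ennreal (LINT t:{0..2*pi}|lborel. K - g t)"
    unfolding set_lebesgue_integral_def
    using sik K by (intro nn_integral_eq_integral) (auto simp: set_integrable_def indicator_def abs_le_iff)
  also have "(LINT t:{0..2*pi}|lborel. K - g t) = 2*pi*K - (LINT t:{0..2*pi}|lborel. g t)"
    using sig by (subst set_integral_diff) (auto simp: set_integral_const set_integrable_def intro!: integrable_real_mult_indicator)
  also have "enn2ereal (ennreal (2*pi*K - (LINT t:{0..2*pi}|lborel. g t))) = ereal (2*pi*K - (LINT t:{0..2*pi}|lborel. g t))"
  proof -
    have "0 \<le> (LINT t:{0..2*pi}|lborel. K - g t)"
      unfolding set_lebesgue_integral_def by (intro integral_nonneg_AE AE_I2) (use K in \<open>auto simp: indicator_def abs_le_iff\<close>)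
    thus ?thesis using sig by (subst (asm) set_integral_diff) (auto simp: set_integral_const set_integrable_def intro!: integrable_real_mult_indicator)
  qed
  finally show ?thesis by (simp add: field_simps)
qed

lemma usc_nbhd:
  assumes "usc_on S u" "x \<in> S" "u x < c"
  shows "\<exists>T. open T \<and> x \<in> T \<and> (\<forall>y\<in>T\<inter>S. u y < c)"
proof -
  have "\<forall>\<^sub>F y in at x within S. u y < c" using assms unfolding usc_on_def by blast
  then obtain T where "open T" "x \<in> T" "\<forall>y\<in>T. y \<noteq> x \<longrightarrow> y \<in> S \<longrightarrow> u y < c"
    unfolding eventually_at_topological by blast
  thus ?thesis using assms(3) by (intro exI[of _ T]) auto
qed

lemma usc_onI:
  assumes "\<And>x c. x \<in> S \<Longrightarrow> u x < c \<Longrightarrow> \<exists>T. open T \<and> x \<in> T \<and> (\<forall>y\<in>T\<inter>S. u y < c)"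
  shows "usc_on S u"
  unfolding usc_on_def
proof (intro ballI allI impI)
  fix x c assume "x \<in> S" "u x < c"
  then obtain T where "open T" "x \<in> T" "\<forall>y\<in>T\<inter>S. u y < c" using assms by blast
  thus "\<forall>\<^sub>F y in at x within S. u y < c" unfolding eventually_at_topological by blast
qed

lemma usc_on_subset:
  assumes "usc_on S u" "T \<subseteq> S" shows "usc_on T u"
proof (rule usc_onI)
  fix x c assume x: "x \<in> T" and c: "u x < c"
  obtain V where "open V" "x \<in> V" "\<forall>y\<in>V\<inter>S. u y < c" using usc_nbhd[OF assms(1) subsetD[OF assms(2) x] c] by blast
  thus "\<exists>V. open V \<and> x \<in> V \<and> (\<forall>y\<in>V\<inter>T. u y < c)" using assms(2) by blast
qed

lemma usc_comp:
  assumes "usc_on S u" "continuous_on A g" "open A" "g ` A \<subseteq> S"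
  shows "usc_on A (\<lambda>x. u (g x))"
proof (rule usc_onI)
  fix x c assume x: "x \<in> A" and c: "u (g x) < c"
  have gx: "g x \<in> S" using assms(4) x by blast
  obtain T where T: "open T" "g x \<in> T" "\<forall>y\<in>T\<inter>S. u y < c" using usc_nbhd[OF assms(1) gx c] by blast
  have op: "open (g -` T \<inter> A)" by (rule continuous_on_open_vimage[OF assms(3), THEN iffD1, OF assms(2), rule_format, OF T(1)])
  have "\<forall>y\<in>(g -` T \<inter> A)\<inter>A. u (g y) < c"
  proof
    fix y assume "y \<in> (g -` T \<inter> A)\<inter>A"
    hence "g y \<in> T" "g y \<in> S" using assms(4) by auto
    thus "u (g y) < c" using T(3) by blast
  qed
  moreover have "x \<in> g -` T \<inter> A" using x T(2) by blast
  ultimately show "\<exists>T'. open T' \<and> x \<in> T' \<and> (\<forall>y\<in>T'\<inter>A. u (g y) < c)"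
    using op by blast
qed

lemma usc_borel:
  fixes F :: "'a::topological_space \<Rightarrow> ereal"
  assumes "usc_on UNIV F"
  shows "F \<in> borel_measurable borel"
proof (subst borel_measurable_ereal_iff_Iio, intro allI)
  fix a
  have "open (F -` {..<a})"
  proof (rule open_subopen[THEN iffD2], intro ballI)
    fix x assume "x \<in> F -` {..<a}"
    hence "F x < a" by simp
    then obtain T where "open T" "x \<in> T" "\<forall>y\<in>T\<inter>UNIV. F y < a" using usc_nbhd[OF assms UNIV_I] by blast
    thus "\<exists>T. open T \<and> x \<in> T \<and> T \<subseteq> F -` {..<a}" by (intro exI[of _ T]) auto
  qed
  hence "F -` {..<a} \<in> sets borel" by (rule borel_open)
  thus "F -` {..<a} \<inter> space borel \<in> sets borel" by simp
qed

lemma usc_max: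
  fixes u :: "'a::topological_space \<Rightarrow> ereal"
  assumes "usc_on S u" "compact K" "K \<subseteq> S" "K \<noteq> {}"
  shows "\<exists>x\<in>K. \<forall>y\<in>K. u y \<le> u x"
proof (rule ccontr)
  assume H: "\<not> ?thesis"
  define s where "s = Sup (u ` K)"
  have lt: "u x < s" if "x \<in> K" for x
  proof -
    have "\<exists>y\<in>K. u x < u y" using H that by (auto simp: not_le)
    then obtain y where "y \<in> K" "u x < u y" by blast
    moreover have "u y \<le> s" unfolding s_def using \<open>y \<in> K\<close> by (simp add: SUP_upper)
    ultimately show ?thesis by simp
  qed
  have "\<forall>x\<in>K. \<exists>c. u x < c \<and> c < s" using lt dense by blast
  then obtain c where c: "\<And>x. x \<in> K \<Longrightarrow> u x < c x \<and> c x < s" by metis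
  have "\<forall>x\<in>K. \<exists>T. open T \<and> x \<in> T \<and> (\<forall>y\<in>T\<inter>S. u y < c x)"
  proof
    fix x assume x: "x \<in> K"
    show "\<exists>T. open T \<and> x \<in> T \<and> (\<forall>y\<in>T\<inter>S. u y < c x)"
      using usc_nbhd[OF assms(1) subsetD[OF assms(3) x] conjunct1[OF c[OF x]]] .
  qed
  then obtain T where T: "\<And>x. x \<in> K \<Longrightarrow> open (T x) \<and> x \<in> T x \<and> (\<forall>y\<in>T x\<inter>S. u y < c x)" by metis
  have To: "\<And>x. x \<in> K \<Longrightarrow> open (T x)" using T by blast
  have Tc: "K \<subseteq> \<Union> (T ` K)" using T by blast
  obtain F where F: "F \<subseteq> K" "finite F" "K \<subseteq> \<Union> (T ` F)"
    using compactE_image[OF assms(2) To Tc] by metis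
  have Fne: "F \<noteq> {}" using F assms(4) by auto
  define m where "m = Max (c ` F)"
  have "m \<in> c ` F" unfolding m_def using F Fne by (intro Max_in) auto
  then obtain x0 where "x0 \<in> F" "m = c x0" by blast
  hence ms: "m < s" using c[of x0] F by blast
  have "s \<le> m" unfolding s_def
  proof (rule Sup_least)
    fix z assume "z \<in> u ` K"
    then obtain y where y: "y \<in> K" "z = u y" by blast
    then obtain x where x: "x \<in> F" "y \<in> T x" using F by blast
    have "x \<in> K" using x F by blast
    hence "u y < c x" using T[of x] x y assms(3) by blast
    also have "c x \<le> m" unfolding m_def using x F by simp
    finally show "z \<le> m" using y by simp
  qed
  thus False using ms by simp
qed

lemma usc_bdd:
  fixes u :: "'a::topological_space \<Rightarrow> ereal"
  assumes "usc_on S u" "compact K" "K \<subseteq> S" "\<And>x. x \<in> K \<Longrightarrow> u x < \<infinity>"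
  shows "\<exists>B. \<forall>x\<in>K. u x \<le> ereal B"
proof (cases "K = {}")
  case True thus ?thesis by simp
next
  case False
  then obtain x where x: "x \<in> K" "\<forall>y\<in>K. u y \<le> u x" using usc_max[OF assms(1-3) False] by blast
  show ?thesis
  proof (cases "u x")
    case (real r) thus ?thesis using x(2) by (intro exI[of _ r]) simp
  next
    case PInf thus ?thesis using assms(4)[OF x(1)] by simp
  next
    case MInf thus ?thesis using x(2) by (intro exI[of _ 0]) simp
  qed
qed

lemma usc_max2:
  assumes "usc_on S f" "usc_on S g"
  shows "usc_on S (\<lambda>x. max (f x) (g x))"
proof (rule usc_onI)
  fix x c assume x: "x \<in> S" and "max (f x) (g x) < c"
  hence "f x < c" "g x < c" by auto
  obtain T1 where "open T1" "x \<in> T1" "\<forall>y\<in>T1\<inter>S. f y < c"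
    using usc_nbhd[OF assms(1) x \<open>f x < c\<close>] by blast
  moreover obtain T2 where "open T2" "x \<in> T2" "\<forall>y\<in>T2\<inter>S. g y < c"
    using usc_nbhd[OF assms(2) x \<open>g x < c\<close>] by blast
  ultimately show "\<exists>T. open T \<and> x \<in> T \<and> (\<forall>y\<in>T\<inter>S. max (f y) (g y) < c)"
    by (intro exI[of _ "T1 \<inter> T2"]) auto
qed

lemma usc_affine:
  assumes "usc_on S u" "\<And>x. x \<in> S \<Longrightarrow> u x < \<infinity>" "0 < e"
  shows "usc_on S (\<lambda>x. ereal e * (u x - ereal B))"
proof (rule usc_onI)
  fix x c assume x: "x \<in> S" and lt: "ereal e * (u x - ereal B) < c"
  show "\<exists>T. open T \<and> x \<in> T \<and> (\<forall>y\<in>T\<inter>S. ereal e * (u y - ereal B) < c)"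
  proof (cases c)
    case PInf
    have "ereal e * (u y - ereal B) < c" if "y \<in> S" for y
      using assms(2)[OF that] assms(3) PInf by (cases "u y") auto
    thus ?thesis by (intro exI[of _ UNIV]) auto
  next
    case MInf thus ?thesis using lt by simp
  next
    case (real r)
    have "u x < ereal (r / e + B)"
      using lt real assms(3) assms(2)[OF x] by (cases "u x") (auto simp: field_simps)
    then obtain T where T: "open T" "x \<in> T" "\<forall>y\<in>T\<inter>S. u y < ereal (r / e + B)"
      using usc_nbhd[OF assms(1) x] by blast
    have "ereal e * (u y - ereal B) < c" if "y \<in> T \<inter> S" for y
    proof -
      have 1: "u y < ereal (r / e + B)" using T(3) that by blast
      show ?thesis
      proof (cases "u y")
        case (real ra)
        hence "ra < r / e + B" using 1 by simp
        hence "e * (ra - B) < r" using assms(3) by (simp add: field_simps)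
        thus ?thesis using real \<open>c = ereal r\<close> by simp
      qed (use 1 real assms(3) in auto)
    qed
    thus ?thesis using T by blast
  qed
qed

lemma circ_pt_cont: "continuous_on UNIV (\<lambda>t. circ_pt a b t)"
  unfolding circ_pt_def by (intro continuous_on_vec_lambda continuous_intros)

lemma circ_meas:
  assumes "usc_on S u" "open S" "\<And>t. circ_pt a b t \<in> S"
  shows "(\<lambda>t. u (circ_pt a b t)) \<in> borel_measurable borel"
  by (rule usc_borel, rule usc_comp[OF assms(1) circ_pt_cont open_UNIV]) (use assms(3) in blast)

lemma circ_bdd:
  assumes "usc_on S u" "\<And>\<zeta>. cmod \<zeta> = 1 \<Longrightarrow> (\<chi> i. a $ i + \<zeta> * b $ i) \<in> S" "\<And>x. x \<in> S \<Longrightarrow> u x < \<infinity>"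
  shows "\<exists>B. \<forall>t. u (circ_pt a b t) \<le> ereal B"
proof -
  define K where "K = (\<lambda>\<zeta>. (\<chi> i. a $ i + \<zeta> * b $ i)) ` sphere 0 1"
  have "compact K" unfolding K_def
    by (rule compact_continuous_image) (auto intro!: continuous_on_vec_lambda continuous_intros)
  moreover have "K \<subseteq> S" unfolding K_def using assms(2) by auto
  ultimately obtain B where B: "\<forall>x\<in>K. u x \<le> ereal B"
    using usc_bdd[OF assms(1)] assms(3) by blast
  have "circ_pt a b t \<in> K" for t unfolding K_def circ_pt_def by (rule image_eqI[of _ _ "cis t"]) auto
  thus ?thesis using B by blast
qed

definition hp :: "(complex \<times> nat) list \<Rightarrow> complex \<Rightarrow> complex" where
  "hp ds z = sum_list (map (\<lambda>(d,m). d * z^m) ds)"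

lemma hp_Nil[simp]: "hp [] z = 0" by (simp add: hp_def)
lemma hp_Cons[simp]: "hp ((d,m)#ds) z = d * z^m + hp ds z" by (simp add: hp_def)

lemma hp_cont: "continuous_on A (hp ds)"
proof (induction ds)
  case Nil thus ?case by (simp add: hp_def)
next
  case (Cons a ds)
  obtain d m where a: "a = (d,m)" by fastforce
  have "hp (a#ds) = (\<lambda>z. d * z^m + hp ds z)" using a by (simp add: fun_eq_iff)
  thus ?case using Cons by (auto intro!: continuous_intros)
qed

lemma J_zero: "((\<lambda>t. cis t * \<beta> * (p + cis t * \<beta>)^m) has_integral 0) {0..2*pi}"
proof -
  define A where "A x = (p + exp(\<i> * x) * \<beta>)^Suc m / (of_nat (Suc m) * \<i>)" for x :: complex
  have dA: "(A has_field_derivative (exp(\<i> * x) * \<beta> * (p + exp(\<i> * x) * \<beta>)^m)) (at x)" for x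
  proof -
    have d1: "((\<lambda>x. p + exp(\<i>*x)*\<beta>) has_field_derivative (exp(\<i>*x)*\<i>*\<beta>)) (at x)"
      by (auto intro!: derivative_eq_intros)
    have "(A has_field_derivative ((1 + of_nat m) * (exp(\<i>*x)*\<i>*\<beta> * (p + exp(\<i>*x)*\<beta>)^m)) / (of_nat (Suc m) * \<i>)) (at x)"
      unfolding A_def by (rule DERIV_cdivide[OF DERIV_power_Suc[OF d1]])
    also have "((1 + of_nat m) * (exp(\<i>*x)*\<i>*\<beta> * (p + exp(\<i>*x)*\<beta>)^m)) / (of_nat (Suc m) * \<i>) = exp(\<i> * x) * \<beta> * (p + exp(\<i> * x) * \<beta>)^m"
    proof -
      have nz: "(1 + of_nat m :: complex) \<noteq> 0" by (metis of_nat_Suc of_nat_eq_0_iff add.commute nat.distinct(1))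
      have e1: "(1 + of_nat m) * (exp(\<i>*x)*\<i>*\<beta> * (p + exp(\<i>*x)*\<beta>)^m) = (of_nat (Suc m) * \<i>) * (exp(\<i> * x) * \<beta> * (p + exp(\<i> * x) * \<beta>)^m)"
        by (simp add: algebra_simps)
      have nz2: "of_nat (Suc m) * \<i> \<noteq> (0::complex)" by (simp del: of_nat_Suc)
      show ?thesis unfolding e1 using nz2 by (rule nonzero_mult_div_cancel_left)
    qed
    finally show ?thesis .
  qed
  have "((\<lambda>t. exp(\<i> * of_real t) * \<beta> * (p + exp(\<i> * of_real t) * \<beta>)^m) has_integral A (of_real (2*pi)) - A (of_real 0)) {0..2*pi}"
    by (rule fundamental_theorem_of_calculus) (auto intro!: has_vector_derivative_real_field dA)
  moreover have "A (of_real (2*pi)) - A (of_real 0) = 0"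
  proof -
    have e: "exp (\<i> * of_real (2*pi)) = 1" using cis_2pi by (simp only: cis_conv_exp)
    show ?thesis unfolding A_def e by simp
  qed
  ultimately show ?thesis by (simp add: cis_conv_exp)
qed

lemma pow_mean: "((\<lambda>t. (p + cis t * \<beta>)^m) has_integral (of_real (2*pi) * p^m)) {0..2*pi}"
proof (induction m)
  case 0
  show ?case using has_integral_const_real[of "1::complex" 0 "2*pi"] by (simp add: scaleR_conv_of_real)
next
  case (Suc m)
  have "((\<lambda>t. p * (p + cis t * \<beta>)^m + cis t * \<beta> * (p + cis t * \<beta>)^m) has_integral (p * (of_real (2*pi) * p^m) + 0)) {0..2*pi}"
    by (intro has_integral_add has_integral_mult_right Suc J_zero)
  thus ?case by (simp add: algebra_simps)
qed

lemma hp_mean_complex: "((\<lambda>t. hp ds (p + cis t * \<beta>)) has_integral (of_real (2*pi) * hp ds p)) {0..2*pi}"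
proof (induction ds)
  case Nil thus ?case by simp
next
  case (Cons a ds)
  obtain d m where a: "a = (d,m)" by fastforce
  have "((\<lambda>t. d * (p + cis t * \<beta>)^m + hp ds (p + cis t * \<beta>)) has_integral (d * (of_real (2*pi) * p^m) + of_real (2*pi) * hp ds p)) {0..2*pi}"
    by (intro has_integral_add has_integral_mult_right Cons pow_mean)
  thus ?case using a by (simp add: algebra_simps)
qed

lemma hp_mean_Re: "((\<lambda>t. Re (hp ds (p + cis t * \<beta>))) has_integral (2*pi * Re (hp ds p))) {0..2*pi}"
  using has_integral_linear[OF hp_mean_complex bounded_linear_Re] by (simp add: o_def)

lemma hp_Re_cont: "continuous_on A (\<lambda>z. Re (hp ds z))"
  by (intro continuous_intros continuous_on_compose2[OF hp_cont]) auto

lemma hp_LINT: "set_integrable lborel {0..2*pi} (\<lambda>t. Re (hp ds (p + cis t * \<beta>)))"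
   "(LINT t:{0..2*pi}|lborel. Re (hp ds (p + cis t * \<beta>))) = 2*pi * Re (hp ds p)"
proof -
  have c: "continuous_on {0..2*pi} (\<lambda>t. Re (hp ds (p + cis t * \<beta>)))"
    by (intro continuous_on_compose2[OF hp_Re_cont[of UNIV]] continuous_intros) auto
  show si: "set_integrable lborel {0..2*pi} (\<lambda>t. Re (hp ds (p + cis t * \<beta>)))"
    by (rule borel_integrable_atLeastAtMost'[OF c])
  show "(LINT t:{0..2*pi}|lborel. Re (hp ds (p + cis t * \<beta>))) = 2*pi * Re (hp ds p)"
    using set_borel_integral_eq_integral(2)[OF si] hp_mean_Re[of ds p \<beta>] by (simp add: integral_unique)
qed

definition lcs :: "(complex \<times> nat \<times> nat) list \<Rightarrow> complex \<Rightarrow> complex" where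
  "lcs xs z = sum_list (map (\<lambda>(c,j,k). c * z^j * cnj z^k) xs)"

lemma lcs_Nil[simp]: "lcs [] z = 0" by (simp add: lcs_def)
lemma lcs_Cons[simp]: "lcs ((c,j,k)#xs) z = c * z^j * cnj z^k + lcs xs z" by (simp add: lcs_def)
lemma lcs_append[simp]: "lcs (xs @ ys) z = lcs xs z + lcs ys z" by (simp add: lcs_def)

definition lmul :: "(complex \<times> nat \<times> nat) list \<Rightarrow> (complex \<times> nat \<times> nat) list \<Rightarrow> (complex \<times> nat \<times> nat) list" where
  "lmul xs ys = concat (map (\<lambda>(c,j,k). map (\<lambda>(d,j',k'). (c*d, j+j', k+k')) ys) xs)"

lemma lcs_mul1: "lcs (map (\<lambda>(d,j',k'). (c*d, j+j', k+k')) ys) z = c * z^j * cnj z^k * lcs ys z"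
proof (induction ys)
  case Nil thus ?case by simp
next
  case (Cons y ys)
  obtain d j' k' where y: "y = (d,j',k')" by (cases y) auto
  show ?case using Cons y by (simp add: power_add algebra_simps)
qed

lemma lcs_mul: "lcs (lmul xs ys) z = lcs xs z * lcs ys z"
proof (induction xs)
  case Nil thus ?case by (simp add: lmul_def)
next
  case (Cons x xs)
  obtain c j k where x: "x = (c,j,k)" by (cases x) auto
  have "lmul (x#xs) ys = map (\<lambda>(d,j',k'). (c*d, j+j', k+k')) ys @ lmul xs ys"
    using x by (simp add: lmul_def)
  hence "lcs (lmul (x#xs) ys) z = lcs (map (\<lambda>(d,j',k'). (c*d, j+j', k+k')) ys) z + lcs (lmul xs ys) z"
    by (simp only: lcs_append)
  also have "\<dots> = c*z^j*cnj z^k * lcs ys z + lcs xs z * lcs ys z" by (simp only: lcs_mul1 Cons.IH)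
  also have "\<dots> = lcs (x#xs) z * lcs ys z" using x by (simp add: algebra_simps)
  finally show ?case .
qed

lemma rpf_lcs:
  fixes P :: "complex \<Rightarrow> real"
  assumes "real_polynomial_function P"
  shows "\<exists>xs. \<forall>z. complex_of_real (P z) = lcs xs z"
  using assms
proof (induction rule: real_polynomial_function.induct)
  case (linear f)
  have fz: "f z = Re z * f 1 + Im z * f \<i>" for z
  proof -
    have e: "Re z *\<^sub>R 1 + Im z *\<^sub>R \<i> = z" by (simp add: complex_eq_iff)
    have "f z = f (Re z *\<^sub>R 1 + Im z *\<^sub>R \<i>)" by (simp only: e)
    also have "\<dots> = Re z * f 1 + Im z * f \<i>"
      using bounded_linear.linear[OF linear] by (simp add: real_vector.linear_add real_vector.linear_scale)
    finally show ?thesis .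
  qed
  define \<alpha> where "\<alpha> = complex_of_real (f 1) / 2 + complex_of_real (f \<i>) / (2*\<i>)"
  define \<gamma> where "\<gamma> = complex_of_real (f 1) / 2 - complex_of_real (f \<i>) / (2*\<i>)"
  have "complex_of_real (f z) = lcs [(\<alpha>,1,0),(\<gamma>,0,1)] z" for z
  proof -
    have "complex_of_real (Re z) = (z + cnj z)/2" by (simp add: complex_add_cnj)
    moreover have "complex_of_real (Im z) = (z - cnj z)/(2*\<i>)" by (simp add: complex_eq_iff)
    ultimately have "complex_of_real (f z) = (z + cnj z)/2 * of_real (f 1) + (z - cnj z)/(2*\<i>) * of_real (f \<i>)"
      by (subst fz[of z]) simp
    also have "\<dots> = lcs [(\<alpha>,1,0),(\<gamma>,0,1)] z"
      unfolding \<alpha>_def \<gamma>_def by (simp add: field_simps)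
    finally show ?thesis .
  qed
  thus ?case by blast
next
  case (const c)
  have "complex_of_real c = lcs [(of_real c,0,0)] z" for z by simp
  thus ?case by blast
next
  case (add f g)
  then obtain xs ys where "\<forall>z. complex_of_real (f z) = lcs xs z" "\<forall>z. complex_of_real (g z) = lcs ys z" by blast
  hence "complex_of_real (f z + g z) = lcs (xs @ ys) z" for z by simp
  thus ?case by blast
next
  case (mult f g)
  then obtain xs ys where "\<forall>z. complex_of_real (f z) = lcs xs z" "\<forall>z. complex_of_real (g z) = lcs ys z" by blast
  hence "complex_of_real (f z * g z) = lcs (lmul xs ys) z" for z by (simp add: lcs_mul)
  thus ?case by blast
qed

definition conv :: "complex \<times> nat \<times> nat \<Rightarrow> complex \<times> nat" where
  "conv x = (case x of (c,j,k) \<Rightarrow> if k \<le> j then (c, j-k) else (cnj c, k-j))"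

lemma Re_cnj_w: "Re (cnj w) = Re w" by simp

lemma lcs_hp:
  assumes z: "cmod z = 1"
  shows "Re (lcs xs z) = Re (hp (map conv xs) z)"
proof (induction xs)
  case Nil thus ?case by simp
next
  case (Cons x xs)
  obtain c j k where x: "x = (c,j,k)" by (cases x) auto
  have zz: "z * cnj z = 1" using z complex_norm_square[of z] by simp
  have trm: "Re (c * z^j * cnj z^k) = Re (fst (conv x) * z^(snd (conv x)))"
  proof (cases "k \<le> j")
    case True
    have "z^j = z^(j-k) * z^k" by (metis True le_add_diff_inverse2 power_add)
    hence "c * z^j * cnj z^k = c * z^(j-k) * (z * cnj z)^k" by (simp add: power_mult_distrib mult.assoc)
    hence eq: "c * z^j * cnj z^k = c * z^(j-k)" using zz by simp
    have cv: "conv x = (c, j-k)" using True x by (simp add: conv_def)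
    show ?thesis unfolding cv fst_conv snd_conv by (simp only: eq)
  next
    case False
    have "cnj z^k = cnj z^(k-j) * cnj z^j" by (metis False nat_le_linear le_add_diff_inverse2 power_add)
    hence "c * z^j * cnj z^k = c * cnj z^(k-j) * (z * cnj z)^j" by (simp add: power_mult_distrib mult.assoc mult.left_commute)
    hence "c * z^j * cnj z^k = cnj (cnj c * z^(k-j))" using zz by simp
    hence "Re (c * z^j * cnj z^k) = Re (cnj (cnj c * z^(k-j)))" by (simp only:)
    hence eq: "Re (c * z^j * cnj z^k) = Re (cnj c * z^(k-j))" by (simp only: Re_cnj_w)
    have cv: "conv x = (cnj c, k-j)" using False x by (simp add: conv_def)
    show ?thesis unfolding cv fst_conv snd_conv by (rule eq)
  qed
  have "hp (map conv (x#xs)) z = fst (conv x) * z^(snd (conv x)) + hp (map conv xs) z"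
    by (cases "conv x") simp
  thus ?case using Cons x trm by simp
qed

lemma poly_hp:
  fixes P :: "complex \<Rightarrow> real"
  assumes "polynomial_function P"
  shows "\<exists>ds. \<forall>z. cmod z = 1 \<longrightarrow> P z = Re (hp ds z)"
proof -
  have "real_polynomial_function P" using assms real_polynomial_function_eq by blast
  then obtain xs where xs: "\<forall>z. complex_of_real (P z) = lcs xs z" using rpf_lcs by blast
  have "P z = Re (hp (map conv xs) z)" if "cmod z = 1" for z
    using lcs_hp[OF that, of xs] xs by (metis Re_complex_of_real)
  thus ?thesis by blast
qed

definition Fk :: "(complex \<Rightarrow> ereal) \<Rightarrow> nat \<Rightarrow> complex \<Rightarrow> real" where
  "Fk f k y = real_of_ereal (max (f y) (ereal (- real k)))"

definition phk :: "(complex \<Rightarrow> ereal) \<Rightarrow> nat \<Rightarrow> complex \<Rightarrow> real" where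
  "phk f k z = (SUP y\<in>sphere 0 1. Fk f k y - real k * dist z y)"

context
  fixes f :: "complex \<Rightarrow> ereal" and B :: real
  assumes fB: "\<And>y. y \<in> sphere 0 1 \<Longrightarrow> f y \<le> ereal B" and B0: "0 \<le> B"
begin

lemma Fk_ereal: "y \<in> sphere 0 1 \<Longrightarrow> ereal (Fk f k y) = max (f y) (ereal (- real k))"
proof -
  assume y: "y \<in> sphere 0 1"
  have "max (f y) (ereal (- real k)) \<le> ereal B" using fB[OF y] B0 by auto
  moreover have "max (f y) (ereal (- real k)) \<ge> ereal (- real k)" by simp
  ultimately have "\<bar>max (f y) (ereal (- real k))\<bar> \<noteq> \<infinity>" by (cases "max (f y) (ereal (- real k))") auto
  thus ?thesis unfolding Fk_def by (rule ereal_real')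
qed

lemma Fk_le: "y \<in> sphere 0 1 \<Longrightarrow> Fk f k y \<le> B"
proof -
  assume y: "y \<in> sphere 0 1"
  have "ereal (Fk f k y) \<le> ereal B" unfolding Fk_ereal[OF y] using fB[OF y] B0 by auto
  thus ?thesis by simp
qed

lemma Fk_ge: "y \<in> sphere 0 1 \<Longrightarrow> - real k \<le> Fk f k y"
proof -
  assume y: "y \<in> sphere 0 1"
  have "ereal (- real k) \<le> ereal (Fk f k y)" unfolding Fk_ereal[OF y] by simp
  thus ?thesis by simp
qed

lemma phk_bdd: "bdd_above ((\<lambda>y. Fk f k y - real k * dist z y) ` sphere 0 1)"
proof (rule bdd_aboveI2)
  fix y assume "y \<in> sphere (0::complex) 1"
  hence "Fk f k y \<le> B" by (rule Fk_le)
  moreover have "0 \<le> real k * dist z y" by simp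
  ultimately show "Fk f k y - real k * dist z y \<le> B" by linarith
qed

lemma phk_upper: "y \<in> sphere 0 1 \<Longrightarrow> Fk f k y - real k * dist z y \<le> phk f k z"
  unfolding phk_def by (rule cSUP_upper[OF _ phk_bdd])

lemma sphere_ne: "sphere (0::complex) 1 \<noteq> {}"
proof -
  have "(1::complex) \<in> sphere 0 1" by simp
  thus ?thesis by blast
qed

lemma phk_least: "(\<And>y. y \<in> sphere 0 1 \<Longrightarrow> Fk f k y - real k * dist z y \<le> a) \<Longrightarrow> phk f k z \<le> a"
  unfolding phk_def by (rule cSUP_least[OF sphere_ne])

lemma phk_le_B: "phk f k z \<le> B"
proof (rule phk_least)
  fix y assume "y \<in> sphere (0::complex) 1"
  hence "Fk f k y \<le> B" by (rule Fk_le)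
  moreover have "0 \<le> real k * dist z y" by simp
  ultimately show "Fk f k y - real k * dist z y \<le> B" by linarith
qed

lemma phk_ge: "z \<in> sphere 0 1 \<Longrightarrow> f z \<le> ereal (phk f k z)"
proof -
  assume z: "z \<in> sphere 0 1"
  have "f z \<le> ereal (Fk f k z)" using Fk_ereal[OF z] by simp
  also have "Fk f k z = Fk f k z - real k * dist z z" by simp
  also have "\<dots> \<le> phk f k z" by (rule phk_upper[OF z])
  finally show ?thesis by simp
qed

lemma phk_ge2: "z \<in> sphere 0 1 \<Longrightarrow> - real k \<le> phk f k z"
proof -
  assume z: "z \<in> sphere 0 1"
  have "- real k \<le> Fk f k z" by (rule Fk_ge[OF z])
  also have "Fk f k z = Fk f k z - real k * dist z z" by simp
  also have "\<dots> \<le> phk f k z" by (rule phk_upper[OF z])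
  finally show ?thesis .
qed

lemma phk_lip: "phk f k z \<le> phk f k w + real k * dist z w"
proof (rule phk_least)
  fix y assume y: "y \<in> sphere (0::complex) 1"
  have "dist z y \<ge> dist w y - dist z w" using dist_triangle[of w y z] by (simp add: dist_commute)
  hence "real k * dist z y \<ge> real k * dist w y - real k * dist z w"
    by (metis mult_left_mono of_nat_0_le_iff right_diff_distrib)
  moreover have "Fk f k y - real k * dist w y \<le> phk f k w" by (rule phk_upper[OF y])
  ultimately show "Fk f k y - real k * dist z y \<le> phk f k w + real k * dist z w" by linarith
qed

lemma phk_cont: "continuous_on A (phk f k)"
proof -
  have "lipschitz_on (real k) A (phk f k)"
  proof (rule lipschitz_onI)
    fix x y assume "x \<in> A" "y \<in> A"
    show "dist (phk f k x) (phk f k y) \<le> real k * dist x y"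
      using phk_lip[of k x y] phk_lip[of k y x] by (simp add: dist_real_def dist_commute abs_le_iff)
  qed simp
  thus ?thesis by (rule lipschitz_on_continuous_on)
qed

lemma phk_mono: "phk f (Suc k) z \<le> phk f k z"
proof (rule phk_least)
  fix y assume y: "y \<in> sphere (0::complex) 1"
  have "ereal (Fk f (Suc k) y) \<le> ereal (Fk f k y)"
    unfolding Fk_ereal[OF y] by (rule max.mono) auto
  hence "Fk f (Suc k) y \<le> Fk f k y" by simp
  moreover have "real k * dist z y \<le> real (Suc k) * dist z y" by (intro mult_right_mono) auto
  moreover have "Fk f k y - real k * dist z y \<le> phk f k z" by (rule phk_upper[OF y])
  ultimately show "Fk f (Suc k) y - real (Suc k) * dist z y \<le> phk f k z" by linarith
qed

lemma phk_conv:
  assumes usc: "usc_on S f" and KS: "sphere 0 1 \<subseteq> S" and z: "z \<in> sphere 0 1" and a: "f z < ereal a"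
  shows "\<exists>k. phk f k z \<le> a"
proof -
  obtain T where T: "open T" "z \<in> T" "\<forall>y\<in>T\<inter>S. f y < ereal a"
    using usc_nbhd[OF usc subsetD[OF KS z] a] by blast
  obtain \<delta> where d: "\<delta> > 0" "ball z \<delta> \<subseteq> T" using T(1,2) open_contains_ball by blast
  obtain k :: nat where k: "real k \<ge> max (- a) ((B - a) / \<delta>)" using real_arch_simple by blast
  have "phk f k z \<le> a"
  proof (rule phk_least)
    fix y assume y: "y \<in> sphere (0::complex) 1"
    show "Fk f k y - real k * dist z y \<le> a"
    proof (cases "dist z y < \<delta>")
      case True
      hence "y \<in> T \<inter> S" using d y KS by auto
      hence "f y < ereal a" using T(3) by blast
      moreover have "ereal (- real k) \<le> ereal a" using k by simp
      ultimately have "ereal (Fk f k y) \<le> ereal a" unfolding Fk_ereal[OF y] by simp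
      hence "Fk f k y \<le> a" by simp
      moreover have "0 \<le> real k * dist z y" by simp
      ultimately show ?thesis by linarith
    next
      case False
      have "B - a \<le> real k * \<delta>" using k d(1) by (simp add: field_simps)
      also have "\<dots> \<le> real k * dist z y" using False by (intro mult_left_mono) auto
      finally show ?thesis using Fk_le[OF y, of k] by linarith
    qed
  qed
  thus ?thesis by blast
qed

lemma phk_SUP:
  assumes usc: "usc_on S f" and KS: "sphere 0 1 \<subseteq> S" and z: "z \<in> sphere 0 1"
  shows "(SUP k. e2ennreal (ereal B - ereal (phk f k z))) = e2ennreal (ereal B - f z)"
proof (rule antisym)
  show "(SUP k. e2ennreal (ereal B - ereal (phk f k z))) \<le> e2ennreal (ereal B - f z)"
  proof (rule SUP_least)
    fix k
    have "ereal B - ereal (phk f k z) \<le> ereal B - f z"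
      by (rule ereal_minus_mono) (auto intro: phk_ge[OF z])
    thus "e2ennreal (ereal B - ereal (phk f k z)) \<le> e2ennreal (ereal B - f z)" by (rule e2ennreal_mono)
  qed
next
  define SS where "SS = (SUP k. e2ennreal (ereal B - ereal (phk f k z)))"
  show "e2ennreal (ereal B - f z) \<le> SS"
  proof (rule ccontr)
    assume "\<not> e2ennreal (ereal B - f z) \<le> SS"
    hence lt: "SS < e2ennreal (ereal B - f z)" by simp
    hence "SS \<noteq> top" by auto
    then obtain s where s: "SS = ennreal s" "0 \<le> s" by (metis ennreal_cases)
    have "\<exists>a. f z < ereal a \<and> s < B - a"
    proof (cases "f z")
      case (real r)
      have "ennreal s < ennreal (B - r)" using lt s real by simp
      hence "s < B - r" using s(2) by (simp add: ennreal_less_iff)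
      thus ?thesis using real by (intro exI[of _ "(r + B - s)/2"]) (auto simp: field_simps)
    next
      case PInf thus ?thesis using fB[OF z] by simp
    next
      case MInf thus ?thesis by (intro exI[of _ "B - s - 1"]) auto
    qed
    then obtain a where a: "f z < ereal a" "s < B - a" by blast
    obtain k where k: "phk f k z \<le> a" using phk_conv[OF usc KS z a(1)] by blast
    have "ennreal s < ennreal (B - a)" using a(2) s(2) by (simp add: ennreal_less_iff)
    also have "ennreal (B - a) \<le> e2ennreal (ereal B - ereal (phk f k z))"
      using k by (simp add: ennreal_leI)
    also have "\<dots> \<le> SS" unfolding SS_def by (rule SUP_upper) simp
    finally show False using s by simp
  qed
qed

end

lemma cis_sphere: "cis t \<in> sphere (0::complex) 1" by simp

lemma ereal_aux: "0 \<le> X \<Longrightarrow> (ereal B - X / ereal (2*pi) < ereal c) = (ereal (2*pi*(B - c)) < X)"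
  by (cases X) (auto simp: field_simps)

lemma approx_hp:
  fixes f :: "complex \<Rightarrow> ereal"
  assumes usc: "usc_on S f" and KS: "sphere 0 1 \<subseteq> S" and fin: "\<And>z. z \<in> S \<Longrightarrow> f z < \<infinity>"
    and c: "tmean (\<lambda>t. f (cis t)) < ereal c"
  shows "\<exists>ds. (\<forall>z. cmod z = 1 \<longrightarrow> f z \<le> ereal (Re (hp ds z))) \<and> Re (hp ds 0) < c"
proof -
  obtain B1 where B1: "\<forall>x\<in>sphere 0 1. f x \<le> ereal B1"
    using usc_bdd[OF usc compact_sphere KS] fin KS by blast
  define B where "B = max B1 0"
  have fB: "\<And>y. y \<in> sphere 0 1 \<Longrightarrow> f y \<le> ereal B" using B1 unfolding B_def
    by (metis le_ereal_trans max.cobounded1)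
  have B0: "0 \<le> B" unfolding B_def by simp
  define I where "I = (indicator {0..2*pi} :: real \<Rightarrow> ennreal)"
  have mf: "(\<lambda>t. f (cis t)) \<in> borel_measurable borel"
  proof (rule usc_borel, rule usc_comp[OF usc _ open_UNIV])
    show "continuous_on UNIV cis" by (intro continuous_intros)
    show "range cis \<subseteq> S" using KS cis_sphere by blast
  qed
  have cph: "continuous_on A (\<lambda>t. phk f k (cis t))" for A k
    by (rule continuous_on_compose2[OF phk_cont[where f=f and B=B, OF fB B0, where A=UNIV and k=k]]) (auto intro!: continuous_intros)
  have mph: "(\<lambda>t. phk f k (cis t)) \<in> borel_measurable borel" for k
    by (rule borel_measurable_continuous_onI[OF cph])
  define Q where "Q = (\<integral>\<^sup>+ t. e2ennreal (ereal B - f (cis t)) * I t \<partial>lborel)"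
  define Qk where "Qk k = (\<integral>\<^sup>+ t. e2ennreal (ereal B - ereal (phk f k (cis t))) * I t \<partial>lborel)" for k
  have R: "tmean (\<lambda>t. f (cis t)) = ereal B - enn2ereal Q / ereal (2*pi)"
    unfolding Q_def I_def by (rule tmean_repr[OF mf _ B0]) (use fB in auto)
  have Rk: "tmean (\<lambda>t. ereal (phk f k (cis t))) = ereal B - enn2ereal (Qk k) / ereal (2*pi)" for k
    unfolding Qk_def I_def by (rule tmean_repr[OF _ _ B0]) (use mph phk_le_B[where f=f and B=B, OF fB B0] in auto)
  have SUPQ: "(SUP k. Qk k) = Q"
  proof -
    have inc: "incseq (\<lambda>k t. e2ennreal (ereal B - ereal (phk f k (cis t))) * I t)"
    proof (rule incseq_SucI, rule le_funI)
      fix k t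
      have "ereal B - ereal (phk f k (cis t)) \<le> ereal B - ereal (phk f (Suc k) (cis t))"
        using phk_mono[where f=f and B=B, OF fB B0, where k=k and z="cis t"] by simp
      thus "e2ennreal (ereal B - ereal (phk f k (cis t))) * I t \<le> e2ennreal (ereal B - ereal (phk f (Suc k) (cis t))) * I t"
        by (intro mult_right_mono e2ennreal_mono) auto
    qed
    have "(SUP k. Qk k) = (\<integral>\<^sup>+ t. (SUP k. e2ennreal (ereal B - ereal (phk f k (cis t))) * I t) \<partial>lborel)"
      unfolding Qk_def
      by (rule nn_integral_monotone_convergence_SUP[symmetric, OF inc]) (use mph in \<open>auto simp: I_def\<close>)
    also have "\<dots> = Q" unfolding Q_def
    proof (rule nn_integral_cong)
      fix t
      show "(SUP k. e2ennreal (ereal B - ereal (phk f k (cis t))) * I t) = e2ennreal (ereal B - f (cis t)) * I t"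
      proof (cases "t \<in> {0..2*pi}")
        case True
        thus ?thesis using phk_SUP[where f=f and B=B, OF fB B0 usc KS cis_sphere] by (simp add: I_def)
      next
        case False thus ?thesis by (simp add: I_def)
      qed
    qed
    finally show ?thesis .
  qed
  have Qk0: "0 \<le> enn2ereal (Qk k)" for k by simp
  have Q0: "0 \<le> enn2ereal Q" by simp
  obtain k where k: "tmean (\<lambda>t. ereal (phk f k (cis t))) < ereal c"
  proof (cases "B - c < 0")
    case True
    have "2*pi*(B - c) < 0" using True by (simp add: mult_pos_neg)
    hence "ereal (2*pi*(B - c)) < 0" by simp
    hence "ereal (2*pi*(B - c)) < enn2ereal (Qk 0)" using Qk0[of 0] by (rule less_le_trans)
    thus ?thesis using that[of 0] Rk[of 0] ereal_aux[OF Qk0[of 0]] by simp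
  next
    case False
    have "ereal (2*pi*(B - c)) < enn2ereal Q" using c R ereal_aux[OF Q0] by simp
    hence "ennreal (2*pi*(B - c)) < Q" using False by (simp add: less_ennreal.rep_eq)
    then obtain k where "ennreal (2*pi*(B - c)) < Qk k" unfolding SUPQ[symmetric] by (auto simp: less_SUP_iff)
    hence "ereal (2*pi*(B - c)) < enn2ereal (Qk k)" using False by (simp add: less_ennreal.rep_eq)
    thus ?thesis using that[of k] Rk[of k] ereal_aux[OF Qk0[of k]] by simp
  qed
  define L where "L = (LINT t:{0..2*pi}|lborel. phk f k (cis t))"
  have "tmean (\<lambda>t. ereal (phk f k (cis t))) = ereal (L / (2*pi))"
    unfolding L_def
  proof (rule tmean_real[OF mph, where K = "B + real k"])
    fix t
    show "\<bar>phk f k (cis t)\<bar> \<le> B + real k"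
      using phk_le_B[where f=f and B=B, OF fB B0, where k=k and z="cis t"] phk_ge2[where f=f and B=B, OF fB B0 cis_sphere[of t], where k=k] B0 by linarith
  qed
  hence Lc: "L / (2*pi) < c" using k by simp
  define \<delta> where "\<delta> = (c - L / (2*pi)) / 4"
  have d0: "0 < \<delta>" unfolding \<delta>_def using Lc by simp
  have "continuous_on (sphere 0 1) (\<lambda>z. phk f k z + \<delta>)"
    by (intro continuous_intros phk_cont[where f=f and B=B, OF fB B0])
  then obtain P where P: "polynomial_function P" "\<forall>x\<in>sphere 0 1. norm ((phk f k x + \<delta>) - P x) < \<delta>"
    using Stone_Weierstrass_polynomial_function[OF compact_sphere _ d0] by blast
  obtain ds where ds: "\<forall>z. cmod z = 1 \<longrightarrow> P z = Re (hp ds z)" using poly_hp[OF P(1)] by blast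
  have Pb: "phk f k z \<le> Re (hp ds z) \<and> Re (hp ds z) \<le> phk f k z + 2*\<delta>" if "cmod z = 1" for z
  proof -
    have "z \<in> sphere 0 1" using that by simp
    hence "\<bar>phk f k z + \<delta> - P z\<bar> < \<delta>" using P(2) by auto
    thus ?thesis using ds that by (auto simp: abs_less_iff)
  qed
  have 1: "\<forall>z. cmod z = 1 \<longrightarrow> f z \<le> ereal (Re (hp ds z))"
  proof (intro allI impI)
    fix z :: complex assume z: "cmod z = 1"
    have "f z \<le> ereal (phk f k z)" using phk_ge[where f=f and B=B, OF fB B0] z by simp
    also have "\<dots> \<le> ereal (Re (hp ds z))" using Pb[OF z] by simp
    finally show "f z \<le> ereal (Re (hp ds z))" .
  qed
  have si1: "set_integrable lborel {0..2*pi} (\<lambda>t. Re (hp ds (0 + cis t * 1)))" by (rule hp_LINT(1))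
  have si2: "set_integrable lborel {0..2*pi} (\<lambda>t. phk f k (cis t) + 2*\<delta>)"
    by (rule borel_integrable_atLeastAtMost') (intro continuous_intros cph)
  have si3: "set_integrable lborel {0..2*pi} (\<lambda>t. phk f k (cis t))"
    by (rule borel_integrable_atLeastAtMost') (intro continuous_intros cph)
  have si4: "set_integrable lborel {0..2*pi} (\<lambda>t. 2*\<delta>)"
    by (rule borel_integrable_atLeastAtMost') (intro continuous_intros)
  have "2*pi * Re (hp ds 0) = (LINT t:{0..2*pi}|lborel. Re (hp ds (0 + cis t * 1)))"
    using hp_LINT(2)[of ds 0 1] by simp
  also have "\<dots> \<le> (LINT t:{0..2*pi}|lborel. phk f k (cis t) + 2*\<delta>)"
    by (rule set_integral_mono[OF si1 si2]) (use Pb in simp)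
  also have "\<dots> = L + 2*pi*(2*\<delta>)"
    unfolding L_def using si3 si4 by (simp add: set_integral_add set_integral_const)
  finally have "2*pi * Re (hp ds 0) \<le> L + 2*pi*(2*\<delta>)" .
  hence "Re (hp ds 0) \<le> L/(2*pi) + 2*\<delta>" by (simp add: field_simps)
  also have "\<dots> < c" using Lc unfolding \<delta>_def by (simp add: field_simps)
  finally show ?thesis using 1 by blast
qed

lemma usc_minus_cont:
  assumes usc: "usc_on S f" and fin: "\<And>x. x \<in> S \<Longrightarrow> f x < \<infinity>" and h: "continuous_on S h" and S: "open S"
  shows "usc_on S (\<lambda>z. f z - ereal (h z))"
proof (rule usc_onI)
  fix x c assume x: "x \<in> S" and lt: "f x - ereal (h x) < c"
  show "\<exists>T. open T \<and> x \<in> T \<and> (\<forall>y\<in>T\<inter>S. f y - ereal (h y) < c)"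
  proof (cases c)
    case PInf
    have "\<forall>y\<in>UNIV\<inter>S. f y - ereal (h y) < c"
    proof
      fix y assume "y \<in> UNIV \<inter> S"
      hence "f y < \<infinity>" using fin by blast
      thus "f y - ereal (h y) < c" using PInf by (cases "f y") auto
    qed
    thus ?thesis by blast
  next
    case MInf thus ?thesis using lt by simp
  next
    case (real r)
    have "f x < ereal (r + h x)" using lt real fin[OF x] by (cases "f x") auto
    then obtain d where d: "f x < ereal d" "d < r + h x" using ereal_dense2 by force
    obtain T1 where T1: "open T1" "x \<in> T1" "\<forall>y\<in>T1\<inter>S. f y < ereal d" using usc_nbhd[OF usc x d(1)] by blast
    have o2: "open (h -` {d - r<..} \<inter> S)"
      by (rule continuous_on_open_vimage[OF S, THEN iffD1, OF h, rule_format]) simp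
    have "\<forall>y\<in>(T1 \<inter> (h -` {d - r<..} \<inter> S))\<inter>S. f y - ereal (h y) < c"
    proof
      fix y assume y: "y \<in> (T1 \<inter> (h -` {d - r<..} \<inter> S))\<inter>S"
      hence "f y < ereal d" "h y > d - r" using T1(3) by auto
      thus "f y - ereal (h y) < c" using real by (cases "f y") auto
    qed
    moreover have "x \<in> T1 \<inter> (h -` {d - r<..} \<inter> S)" using T1(2) d(2) x by auto
    moreover have "open (T1 \<inter> (h -` {d - r<..} \<inter> S))" using T1(1) o2 by blast
    ultimately show ?thesis by blast
  qed
qed

lemma max_principle:
  fixes f :: "complex \<Rightarrow> ereal"
  assumes S: "open S" "cball 0 1 \<subseteq> S" and usc: "usc_on S f" and fin: "\<And>z. z \<in> S \<Longrightarrow> f z < \<infinity>"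
    and loc: "\<And>p. p \<in> S \<Longrightarrow> \<exists>r>0. \<forall>\<beta>. cmod \<beta> < r \<longrightarrow> f p \<le> tmean (\<lambda>t. f (p + cis t * \<beta>))"
    and bnd: "\<And>z. cmod z = 1 \<Longrightarrow> f z \<le> ereal (Re (hp ds z))"
  shows "f 0 \<le> ereal (Re (hp ds 0))"
proof (rule ccontr)
  assume "\<not> ?thesis"
  hence f0: "ereal (Re (hp ds 0)) < f 0" by simp
  define h where "h z = Re (hp ds z)" for z
  define g where "g z = f z - ereal (h z)" for z
  have hc: "continuous_on A h" for A unfolding h_def by (rule hp_Re_cont)
  have gusc: "usc_on S g" unfolding g_def by (rule usc_minus_cont[OF usc fin hc S(1)])
  define K where "K = cball (0::complex) 1"
  have K: "compact K" "K \<subseteq> S" "K \<noteq> {}" using S unfolding K_def by auto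
  obtain x0 where x0: "x0 \<in> K" "\<forall>y\<in>K. g y \<le> g x0" using usc_max[OF gusc K] by blast
  have "0 \<in> K" unfolding K_def by simp
  hence "g 0 \<le> g x0" using x0 by blast
  moreover have "0 < g 0" unfolding g_def h_def using f0 fin[of 0] S by (cases "f 0") auto
  ultimately have gx0: "0 < g x0" by simp
  have "g x0 < \<infinity>" unfolding g_def using fin[of x0] x0 K by (cases "f x0") auto
  then obtain m where m: "g x0 = ereal m" "0 < m" using gx0 by (cases "g x0") auto
  define Ob where "Ob = \<Union>{T. open T \<and> (\<forall>y\<in>T\<inter>S. g y < ereal m)}"
  have oO: "open Ob" unfolding Ob_def by auto
  define A where "A = K - Ob"
  have A_iff: "z \<in> A \<longleftrightarrow> z \<in> K \<and> ereal m \<le> g z" for z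
  proof
    assume z: "z \<in> A"
    hence zK: "z \<in> K" unfolding A_def by blast
    have "\<not> g z < ereal m"
    proof
      assume "g z < ereal m"
      then obtain T where "open T" "z \<in> T" "\<forall>y\<in>T\<inter>S. g y < ereal m" using usc_nbhd[OF gusc _] zK K(2) by blast
      hence "z \<in> Ob" unfolding Ob_def by blast
      thus False using z unfolding A_def by blast
    qed
    thus "z \<in> K \<and> ereal m \<le> g z" using zK by simp
  next
    assume z: "z \<in> K \<and> ereal m \<le> g z"
    have "z \<notin> Ob"
    proof
      assume "z \<in> Ob"
      then obtain T where "open T" "z \<in> T" "\<forall>y\<in>T\<inter>S. g y < ereal m" unfolding Ob_def by blast
      moreover have "z \<in> S" using z K(2) by blast
      ultimately have "g z < ereal m" by blast
      thus False using z by (meson linorder_not_le)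
    qed
    thus "z \<in> A" using z unfolding A_def by blast
  qed
  have cA: "compact A" unfolding A_def by (rule compact_diff[OF K(1) oO])
  have x0A: "x0 \<in> A" using A_iff x0 m by simp
  have "compact (norm ` A)" by (rule compact_continuous_image[OF _ cA]) (intro continuous_intros)
  then obtain s where s: "s \<in> norm ` A" "\<forall>t\<in>norm ` A. t \<le> s"
    using compact_attains_sup[of "norm ` A"] x0A by blast
  then obtain p where p: "p \<in> A" "s = norm p" by blast
  have pmax: "norm z \<le> norm p" if "z \<in> A" for z
  proof -
    have "norm z \<in> norm ` A" using that by (rule imageI)
    thus ?thesis using s(2) p(2) by blast
  qed
  have pK: "p \<in> K" using p A_iff by blast
  have gp: "g p = ereal m"
    using A_iff[of p] p x0(2) pK m(1) by (metis antisym)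
  have p1: "norm p < 1"
  proof (rule ccontr)
    assume "\<not> norm p < 1"
    hence "cmod p = 1" using pK unfolding K_def by simp
    hence "g p \<le> 0" using bnd[of p] unfolding g_def h_def by (cases "f p") auto
    thus False using gp m by simp
  qed
  have pS: "p \<in> S" using pK K by blast
  obtain r where r: "r > 0" "\<forall>\<beta>. cmod \<beta> < r \<longrightarrow> f p \<le> tmean (\<lambda>t. f (p + cis t * \<beta>))"
    using loc[OF pS] by blast
  define u0 where "u0 = (if p = 0 then 1 else p / of_real (cmod p))"
  have u0n: "cmod u0 = 1" unfolding u0_def by (auto simp: norm_divide)
  have pu0: "p = of_real (cmod p) * u0" unfolding u0_def by auto
  define \<rho> where "\<rho> = min (r/2) ((1 - cmod p)/2)"
  have rho: "0 < \<rho>" "\<rho> < r" "cmod p + \<rho> < 1" unfolding \<rho>_def using r(1) p1 by (auto simp: min_def field_simps)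
  define q where "q t = p + cis t * (of_real \<rho> * u0)" for t
  have nq: "cmod (cis t * (of_real \<rho> * u0)) = \<rho>" for t using u0n rho by (simp add: norm_mult)
  have qK: "q t \<in> K" for t
  proof -
    have "cmod (q t) \<le> cmod p + \<rho>" unfolding q_def using norm_triangle_ineq[of p "cis t * (of_real \<rho> * u0)"] nq by simp
    thus ?thesis unfolding K_def using rho by simp
  qed
  have qgt: "cmod p < cmod (q t)" if t: "t \<in> {0..pi/3}" for t
  proof -
    have "q t = u0 * (of_real (cmod p) + cis t * of_real \<rho>)" unfolding q_def
      by (subst pu0) (simp add: algebra_simps)
    hence "cmod (q t) = cmod (of_real (cmod p) + cis t * of_real \<rho>)" using u0n by (simp add: norm_mult)
    also have "\<dots> \<ge> Re (of_real (cmod p) + cis t * of_real \<rho>)" by (rule complex_Re_le_cmod)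
    also have "Re (of_real (cmod p) + cis t * of_real \<rho>) = cmod p + \<rho> * cos t" by simp
    finally have 1: "cmod p + \<rho> * cos t \<le> cmod (q t)" .
    have "cos (pi/3) \<le> cos t" using t by (intro cos_monotone_0_pi_le) auto
    hence "1/2 \<le> cos t" by (simp add: cos_60)
    hence "0 < cos t" by simp
    hence "0 < \<rho> * cos t" using rho(1) by simp
    thus ?thesis using 1 by linarith
  qed
  have garc: "g (q t) < ereal m" if t: "t \<in> {0..pi/3}" for t
  proof -
    have "q t \<notin> A" using pmax qgt[OF t] by force
    hence "\<not> ereal m \<le> g (q t)" using A_iff qK by blast
    thus ?thesis by simp
  qed
  have carc: "compact (q ` {0..pi/3})"
    by (rule compact_continuous_image) (auto simp: q_def intro!: continuous_intros)
  obtain t1 where t1: "t1 \<in> {0..pi/3}" "\<forall>y\<in>q ` {0..pi/3}. g y \<le> g (q t1)"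
    using usc_max[OF gusc carc] qK K(2) by fastforce
  obtain m2 where m2: "g (q t1) < ereal m2" "m2 < m" using ereal_dense2[OF garc[OF t1(1)]] by auto
  have bd1: "f (q t) \<le> ereal (h (q t) + m)" for t
  proof -
    have "g (q t) \<le> ereal m" using x0(2) qK[of t] m(1) by metis
    thus ?thesis unfolding g_def by (cases "f (q t)") auto
  qed
  have bd2: "f (q t) \<le> ereal (h (q t) + m2)" if "t \<in> {0..pi/3}" for t
  proof -
    have "g (q t) \<le> ereal m2" using t1(2) that m2(1) by force
    thus ?thesis unfolding g_def by (cases "f (q t)") auto
  qed
  define \<phi> where "\<phi> t = h (q t) + m - (m - m2) * indicator {0..pi/3} t" for t
  have cq: "continuous_on A (\<lambda>t. h (q t))" for A
    unfolding q_def by (rule continuous_on_compose2[OF hc[of UNIV]]) (auto intro!: continuous_intros)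
  have fq: "f (q t) \<le> ereal (\<phi> t)" for t
    using bd1[of t] bd2[of t] unfolding \<phi>_def by (cases "t \<in> {0..pi/3}") auto
  have "compact ((\<lambda>t. h (q t)) ` {0..2*pi})" by (rule compact_continuous_image[OF cq]) simp
  then obtain Kh where Kh: "\<forall>x\<in>(\<lambda>t. h (q t)) ` {0..2*pi}. norm x \<le> Kh" using compact_imp_bounded bounded_iff by metis
  have mphi: "\<phi> \<in> borel_measurable borel"
    unfolding \<phi>_def using borel_measurable_continuous_onI[OF cq] by measurable
  have tm: "tmean (\<lambda>t. ereal (\<phi> t)) = ereal ((LINT t:{0..2*pi}|lborel. \<phi> t) / (2*pi))"
  proof (rule tmean_real[OF mphi, where K = "Kh + \<bar>m\<bar> + \<bar>m - m2\<bar>"])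
    fix t assume t: "t \<in> {0..2*pi}"
    have "\<bar>h (q t)\<bar> \<le> Kh" using Kh t by auto
    moreover have "\<bar>(m - m2) * indicator {0..pi/3} t\<bar> \<le> \<bar>m - m2\<bar>" by (auto simp: indicator_def)
    ultimately show "\<bar>\<phi> t\<bar> \<le> Kh + \<bar>m\<bar> + \<bar>m - m2\<bar>" unfolding \<phi>_def by linarith
  qed
  have si1: "set_integrable lborel {0..2*pi} (\<lambda>t. h (q t))"
    by (rule borel_integrable_atLeastAtMost'[OF cq])
  have si2: "set_integrable lborel {0..2*pi} (\<lambda>t. m)"
    by (rule borel_integrable_atLeastAtMost') (intro continuous_intros)
  have si3: "set_integrable lborel {0..2*pi} (\<lambda>t. (m - m2) * indicator {0..pi/3} t)"
    unfolding set_integrable_def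
    by (rule integrableI_bounded_set_indicator[where B = "\<bar>m - m2\<bar>"]) (auto simp: indicator_def)
  have Ih: "(LINT t:{0..2*pi}|lborel. h (q t)) = 2*pi * h p"
    using hp_LINT(2)[of ds p "of_real \<rho> * u0"] unfolding h_def q_def by simp
  have Iind: "(LINT t:{0..2*pi}|lborel. (m - m2) * indicator {0..pi/3} t) = (m - m2) * (pi/3)"
  proof -
    have "(LINT t:{0..2*pi}|lborel. (m - m2) * indicator {0..pi/3} t) = (LBINT t. (m - m2) * indicator {0..pi/3} t)"
      unfolding set_lebesgue_integral_def by (intro Bochner_Integration.integral_cong) (auto simp: indicator_def)
    also have "\<dots> = (m - m2) * measure lborel {0..pi/3}" by simp
    also have "measure lborel {0..pi/3} = pi/3" by simp
    finally show ?thesis .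
  qed
  have "(LINT t:{0..2*pi}|lborel. \<phi> t) = 2*pi * h p + 2*pi*m - (m - m2) * (pi/3)"
    unfolding \<phi>_def using si1 si2 si3 Ih Iind
    by (simp add: set_integral_add set_integral_diff set_integral_const)
  hence "tmean (\<lambda>t. ereal (\<phi> t)) = ereal (h p + m - (m - m2)/6)" unfolding tm by (simp add: field_simps)
  moreover have "tmean (\<lambda>t. f (p + cis t * (of_real \<rho> * u0))) \<le> tmean (\<lambda>t. ereal (\<phi> t))"
    by (rule tmean_mono) (use fq in \<open>simp add: q_def\<close>)
  moreover have "f p \<le> tmean (\<lambda>t. f (p + cis t * (of_real \<rho> * u0)))"
    using r(2) nq[of 0] rho by (simp add: norm_mult)
  moreover have "f p = ereal (h p + m)" using gp unfolding g_def by (cases "f p") auto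
  ultimately have "ereal (h p + m) \<le> ereal (h p + m - (m - m2)/6)" by (metis order_trans)
  hence "h p + m \<le> h p + m - (m - m2)/6" by simp
  thus False using m2 by simp
qed

lemma LG1:
  fixes f :: "complex \<Rightarrow> ereal"
  assumes S: "open S" "cball 0 1 \<subseteq> S" and usc: "usc_on S f" and fin: "\<And>z. z \<in> S \<Longrightarrow> f z < \<infinity>"
    and loc: "\<And>p. p \<in> S \<Longrightarrow> \<exists>r>0. \<forall>\<beta>. cmod \<beta> < r \<longrightarrow> f p \<le> tmean (\<lambda>t. f (p + cis t * \<beta>))"
  shows "f 0 \<le> tmean (\<lambda>t. f (cis t))"
proof (rule ccontr)
  assume "\<not> ?thesis"
  hence "tmean (\<lambda>t. f (cis t)) < f 0" by simp
  then obtain c where c: "tmean (\<lambda>t. f (cis t)) < ereal c" "ereal c < f 0" using ereal_dense2 by blast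
  have KS: "sphere 0 1 \<subseteq> S" using S(2) by auto
  obtain ds where ds: "\<forall>z. cmod z = 1 \<longrightarrow> f z \<le> ereal (Re (hp ds z))" "Re (hp ds 0) < c"
    using approx_hp[OF usc KS fin c(1)] by blast
  have a: "f 0 \<le> ereal (Re (hp ds 0))" by (rule max_principle[OF S usc fin loc]) (use ds in auto)
  have "ereal (Re (hp ds 0)) < ereal c" using ds(2) by simp
  hence "f 0 < ereal c" using a by (rule le_less_trans[rotated])
  thus False using c(2) by (simp add: less_asym)
qed

lemma norm_vec_scale: "norm ((\<chi> i. c * b $ i) :: complex^'n) = cmod c * norm b"
  unfolding norm_vec_def by (simp add: norm_mult L2_set_right_distrib)

lemma dist_disc: "dist x ((\<chi> i. x $ i + \<zeta> * b $ i) :: complex^'n) = cmod \<zeta> * norm b"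
proof -
  have "x - (\<chi> i. x $ i + \<zeta> * b $ i) = - (\<chi> i. \<zeta> * b $ i)" by (simp add: vec_eq_iff)
  thus ?thesis by (simp add: dist_norm norm_vec_scale del: norm_minus_cancel) (metis norm_minus_cancel norm_vec_scale)
qed

lemma disc_in_ball:
  assumes "norm b < r" "cmod \<zeta> \<le> 1"
  shows "((\<chi> i. x $ i + \<zeta> * b $ i) :: complex^'n) \<in> ball x r"
proof -
  have "cmod \<zeta> * norm b \<le> norm b" using assms(2) by (simp add: mult_left_le_one_le)
  thus ?thesis using assms(1) dist_disc[of x \<zeta> b] by simp
qed

lemma psh_local:
  fixes w :: "complex^'n \<Rightarrow> ereal"
  assumes O: "open \<Omega>" and usc: "usc_on \<Omega> w" and fin: "\<And>z. z \<in> \<Omega> \<Longrightarrow> w z < \<infinity>"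
    and loc: "\<And>x. x \<in> \<Omega> \<Longrightarrow> \<exists>r>0. \<forall>b. norm b < r \<longrightarrow> w x \<le> circle_mean w x b"
  shows "psh \<Omega> w"
  unfolding psh_def
proof (intro conjI O usc ballI allI impI)
  show "w z < \<infinity>" if "z \<in> \<Omega>" for z using fin that .
  fix a b :: "complex^'n"
  assume disc: "\<forall>\<zeta>::complex. cmod \<zeta> \<le> 1 \<longrightarrow> (\<chi> i. a $ i + \<zeta> * b $ i) \<in> \<Omega>"
  define L where "L \<zeta> = ((\<chi> i. a $ i + \<zeta> * b $ i) :: complex^'n)" for \<zeta>
  have Lc: "continuous_on A L" for A unfolding L_def by (intro continuous_on_vec_lambda continuous_intros)
  define S where "S = L -` \<Omega>"
  have So: "open S" unfolding S_def using continuous_on_open_vimage[OF open_UNIV, THEN iffD1, OF Lc, rule_format, OF O] by simp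
  have cb: "cball 0 1 \<subseteq> S" unfolding S_def L_def using disc by auto
  define f where "f \<zeta> = w (L \<zeta>)" for \<zeta>
  have fusc: "usc_on S f" unfolding f_def by (rule usc_comp[OF usc Lc So]) (auto simp: S_def)
  have ffin: "f z < \<infinity>" if "z \<in> S" for z using fin that unfolding f_def S_def by auto
  have circ: "circ_pt (L p) (\<chi> i. \<beta> * b $ i) t = L (p + cis t * \<beta>)" for p \<beta> t
    unfolding circ_pt_def L_def by (simp add: vec_eq_iff algebra_simps)
  have floc: "\<exists>r>0. \<forall>\<beta>. cmod \<beta> < r \<longrightarrow> f p \<le> tmean (\<lambda>t. f (p + cis t * \<beta>))" if p: "p \<in> S" for p
  proof -
    have "L p \<in> \<Omega>" using p unfolding S_def by simp
    then obtain r where r: "r > 0" "\<forall>b'. norm b' < r \<longrightarrow> w (L p) \<le> circle_mean w (L p) b'" using loc by blast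
    define r' where "r' = r / (norm b + 1)"
    have nb: "0 < norm b + 1" using norm_ge_zero[of b] by linarith
    have r'0: "r' > 0" unfolding r'_def using r(1) nb by simp
    have "f p \<le> tmean (\<lambda>t. f (p + cis t * \<beta>))" if "cmod \<beta> < r'" for \<beta>
    proof -
      have "cmod \<beta> * norm b \<le> cmod \<beta> * (norm b + 1)" by (simp add: mult_left_mono)
      also have "\<dots> < r' * (norm b + 1)" using that nb by (intro mult_strict_right_mono) auto
      also have "\<dots> = r" unfolding r'_def using nb by simp
      finally have "norm (\<chi> i. \<beta> * b $ i) < r" by (simp add: norm_vec_scale)
      hence "w (L p) \<le> circle_mean w (L p) (\<chi> i. \<beta> * b $ i)" using r by blast
      thus ?thesis unfolding circle_mean_tmean circ f_def .
    qed
    thus ?thesis using r'0 by blast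
  qed
  have "f 0 \<le> tmean (\<lambda>t. f (cis t))" by (rule LG1[OF So cb fusc ffin floc])
  moreover have "f 0 = w a" unfolding f_def L_def by (simp add: vec_eq_iff)
  moreover have "tmean (\<lambda>t. f (cis t)) = circle_mean w a b"
    unfolding circle_mean_tmean f_def L_def circ_pt_def by simp
  ultimately show "w a \<le> circle_mean w a b" by simp
qed

lemma circle_mean_minf:
  fixes u :: "complex^'n \<Rightarrow> ereal"
  assumes usc: "usc_on G u" and G: "open G" and fin: "\<And>z. z \<in> G \<Longrightarrow> u z < \<infinity>"
    and disc: "\<And>\<zeta>. cmod \<zeta> \<le> 1 \<Longrightarrow> (\<chi> i. y $ i + \<zeta> * b $ i) \<in> G"
    and tau: "0 < \<tau>" and arc: "\<And>t. t \<in> {0..\<tau>} \<Longrightarrow> u (circ_pt y b t) = -\<infinity>"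
  shows "circle_mean u y b = -\<infinity>"
proof -
  have cG: "circ_pt y b t \<in> G" for t unfolding circ_pt_def by (rule disc) simp
  obtain B1 where B1: "\<forall>t. u (circ_pt y b t) \<le> ereal B1"
    using circ_bdd[OF usc _ fin] disc by force
  define B where "B = max B1 0"
  have Bb: "u (circ_pt y b t) \<le> ereal B" for t using B1 unfolding B_def by (metis le_ereal_trans max.cobounded1)
  have meas: "(\<lambda>t. u (circ_pt y b t)) \<in> borel_measurable borel" by (rule circ_meas[OF usc G cG])
  define Q where "Q = (\<integral>\<^sup>+ t. e2ennreal (ereal B - u (circ_pt y b t)) * indicator {0..2*pi} t \<partial>lborel)"
  have R: "circle_mean u y b = ereal B - enn2ereal Q / ereal (2*pi)"
    unfolding circle_mean_tmean Q_def apply (rule tmean_repr[OF meas])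
    subgoal using Bb by blast
    by (simp add: B_def)
  define \<tau>' where "\<tau>' = min \<tau> (2*pi)"
  have t0: "0 < \<tau>'" unfolding \<tau>'_def using tau by simp
  have "(\<integral>\<^sup>+ t. top * indicator {0..\<tau>'} t \<partial>lborel) \<le> Q"
    unfolding Q_def
  proof (rule nn_integral_mono)
    fix t
    show "top * indicator {0..\<tau>'} t \<le> e2ennreal (ereal B - u (circ_pt y b t)) * indicator {0..2*pi} t"
    proof (cases "t \<in> {0..\<tau>'}")
      case True
      hence "t \<in> {0..\<tau>}" "t \<in> {0..2*pi}" unfolding \<tau>'_def by auto
      thus ?thesis using True arc by simp
    qed simp
  qed
  moreover have "(\<integral>\<^sup>+ t. top * indicator {0..\<tau>'} t \<partial>lborel) = top"
    using t0 by (simp add: nn_integral_cmult_indicator ennreal_mult_top)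
  ultimately have "Q = top" by (simp add: top_unique)
  thus ?thesis unfolding R by simp
qed

lemma Zint:
  fixes u :: "complex^'n \<Rightarrow> ereal"
  assumes G: "open G" "connected G" and psh: "psh G u"
    and V: "V \<subseteq> {z\<in>G. u z = -\<infinity>}" "open V" "V \<noteq> {}"
  shows "\<forall>x\<in>G. u x = -\<infinity>"
proof -
  define Z where "Z = {z\<in>G. u z = -\<infinity>}"
  define W where "W = interior Z"
  have usc: "usc_on G u" and fin: "\<And>z. z \<in> G \<Longrightarrow> u z < \<infinity>"
    and sm: "\<And>a b. (\<forall>\<zeta>::complex. cmod \<zeta> \<le> 1 \<longrightarrow> (\<chi> i. a $ i + \<zeta> * b $ i) \<in> G) \<Longrightarrow> u a \<le> circle_mean u a b"
    using psh unfolding psh_def by auto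
  have oW: "open W" unfolding W_def by simp
  have WZ: "W \<subseteq> Z" unfolding W_def by (rule interior_subset)
  have WG: "W \<subseteq> G" using WZ unfolding Z_def by auto
  have VW: "V \<subseteq> W" unfolding W_def Z_def using V by (simp add: interior_maximal)
  have KC: "x \<in> W" if x: "x \<in> G" "x \<in> closure W" for x
  proof -
    obtain d where d: "d > 0" "cball x d \<subseteq> G" using x(1) G(1) open_contains_cball by blast
    have "ball x (d/3) \<subseteq> Z"
    proof
      fix y assume y: "y \<in> ball x (d/3)"
      have d3: "d/3 > 0" using d(1) by simp
      obtain q where q: "q \<in> W" "dist q x < d/3" using x(2) d3 unfolding closure_approachable by blast
      define b where "b = q - y"
      have "norm b = dist q y" unfolding b_def by (simp add: dist_norm)
      moreover have "dist q y \<le> dist q x + dist x y" by (rule dist_triangle)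
      moreover have "dist x y < d/3" using y by simp
      ultimately have nb: "norm b < 2*d/3" using q(2) by linarith
      have discG: "(\<chi> i. y $ i + \<zeta> * b $ i) \<in> G" if "cmod \<zeta> \<le> 1" for \<zeta>
      proof -
        have "dist y (\<chi> i. y $ i + \<zeta> * b $ i) < 2*d/3" using disc_in_ball[OF nb that, of y] by simp
        moreover have "dist x y < d/3" using y by simp
        ultimately have "dist x (\<chi> i. y $ i + \<zeta> * b $ i) \<le> d" using dist_triangle[of x "\<chi> i. y $ i + \<zeta> * b $ i" y] by linarith
        thus ?thesis using d(2) by auto
      qed
      have yG: "y \<in> G" using discG[of 0] by (simp add: vec_eq_iff)
      obtain s where s: "s > 0" "ball q s \<subseteq> W" using q(1) oW open_contains_ball by blast
      have c0: "circ_pt y b 0 = q" unfolding circ_pt_def b_def by (simp add: vec_eq_iff)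
      have "isCont (\<lambda>t. circ_pt y b t) 0" using circ_pt_cont[of y b] by (simp add: continuous_on_eq_continuous_at)
      then obtain \<tau> where tau: "\<tau> > 0" "\<forall>t. dist t 0 < \<tau> \<longrightarrow> dist (circ_pt y b t) (circ_pt y b 0) < s"
        using s(1) unfolding continuous_at_eps_delta by blast
      have arc: "u (circ_pt y b t) = -\<infinity>" if "t \<in> {0..\<tau>/2}" for t
      proof -
        have "dist (circ_pt y b t) q < s" using tau that c0 by (auto simp: dist_real_def)
        hence "circ_pt y b t \<in> W" using s(2) by (auto simp: dist_commute)
        thus ?thesis using WZ unfolding Z_def by auto
      qed
      have t2: "0 < \<tau>/2" using tau by simp
      have "circle_mean u y b = -\<infinity>"
        by (rule circle_mean_minf[OF usc G(1) fin discG t2 arc]) auto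
      hence "u y = -\<infinity>" using sm[of y b] discG by auto
      thus "y \<in> Z" using yG unfolding Z_def by simp
    qed
    hence "ball x (d/3) \<subseteq> interior Z" by (rule interior_maximal) simp
    moreover have "x \<in> ball x (d/3)" using d(1) by simp
    ultimately have "x \<in> interior Z" by blast
    thus ?thesis unfolding W_def .
  qed
  have op: "openin (top_of_set G) W" unfolding openin_open using oW WG by blast
  have cl: "closedin (top_of_set G) W"
    unfolding closedin_closed
  proof (intro exI[of _ "closure W"] conjI)
    show "closed (closure W)" by simp
    show "W = G \<inter> closure W" using KC WG closure_subset by blast
  qed
  have "W = {} \<or> W = G" using G(2) op cl unfolding connected_clopen by blast
  hence "W = G" using VW V(3) by blast
  thus ?thesis using WZ unfolding Z_def by blast
qed

lemma circ_in_disc: "circ_pt a b t = (\<chi> i. a $ i + cis t * b $ i)" by (simp add: circ_pt_def)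

lemma psh_restrict:
  assumes "psh \<Omega> v" "open \<Omega>'" "\<Omega>' \<subseteq> \<Omega>"
  shows "psh \<Omega>' v"
proof -
  have "usc_on \<Omega> v" "\<forall>z\<in>\<Omega>. v z < \<infinity>"
    "\<forall>a b. (\<forall>\<zeta>::complex. cmod \<zeta> \<le> 1 \<longrightarrow> (\<chi> i. a $ i + \<zeta> * b $ i) \<in> \<Omega>) \<longrightarrow> v a \<le> circle_mean v a b"
    using assms(1) unfolding psh_def by auto
  thus ?thesis unfolding psh_def using assms(2,3) usc_on_subset by blast
qed

lemma shift_submean:
  fixes v :: "complex^'n \<Rightarrow> ereal"
  assumes psh: "psh \<Omega> v" and disc: "\<And>\<zeta>. cmod \<zeta> \<le> 1 \<Longrightarrow> (\<chi> i. a $ i + \<zeta> * b $ i) \<in> \<Omega>"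
  shows "v a - ereal \<eta> \<le> circle_mean (\<lambda>x. v x - ereal \<eta>) a b"
proof -
  have O: "open \<Omega>" and usc: "usc_on \<Omega> v" and fin: "\<And>z. z \<in> \<Omega> \<Longrightarrow> v z < \<infinity>"
    and sm: "v a \<le> circle_mean v a b" using psh disc unfolding psh_def by auto
  have cO: "circ_pt a b t \<in> \<Omega>" for t unfolding circ_pt_def by (rule disc) simp
  obtain B where B: "\<forall>t. v (circ_pt a b t) \<le> ereal B" using circ_bdd[OF usc _ fin] disc by force
  have meas: "(\<lambda>t. v (circ_pt a b t)) \<in> borel_measurable borel" by (rule circ_meas[OF usc O cO])
  have "circle_mean (\<lambda>x. v x - ereal \<eta>) a b = tmean (\<lambda>t. v (circ_pt a b t) + ereal (- \<eta>))"
    unfolding circle_mean_tmean by (simp add: minus_ereal_def)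
  also have "\<dots> = tmean (\<lambda>t. v (circ_pt a b t)) + ereal (- \<eta>)"
    by (rule tmean_add_const[OF meas]) (use B in blast)
  also have "\<dots> = circle_mean v a b - ereal \<eta>" unfolding circle_mean_tmean by (simp add: minus_ereal_def)
  finally show ?thesis using sm by (simp add: ereal_minus_mono)
qed

lemma affine_submean:
  fixes u :: "complex^'n \<Rightarrow> ereal"
  assumes psh: "psh G u" and disc: "\<And>\<zeta>. cmod \<zeta> \<le> 1 \<Longrightarrow> (\<chi> i. a $ i + \<zeta> * b $ i) \<in> G" and e: "0 < e"
  shows "ereal e * (u a - ereal B) \<le> circle_mean (\<lambda>x. ereal e * (u x - ereal B)) a b"
proof -
  have O: "open G" and usc: "usc_on G u" and fin: "\<And>z. z \<in> G \<Longrightarrow> u z < \<infinity>"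
    and sm: "u a \<le> circle_mean u a b" using psh disc unfolding psh_def by auto
  have cO: "circ_pt a b t \<in> G" for t unfolding circ_pt_def by (rule disc) simp
  obtain B1 where B1: "\<forall>t. u (circ_pt a b t) \<le> ereal B1" using circ_bdd[OF usc _ fin] disc by force
  have meas: "(\<lambda>t. u (circ_pt a b t)) \<in> borel_measurable borel" by (rule circ_meas[OF usc O cO])
  have meas2: "(\<lambda>t. u (circ_pt a b t) + ereal (- B)) \<in> borel_measurable borel" using meas by measurable
  have B2: "u (circ_pt a b t) + ereal (- B) \<le> ereal (B1 - B)" for t
    using B1[rule_format, of t] by (cases "u (circ_pt a b t)") auto
  have "circle_mean (\<lambda>x. ereal e * (u x - ereal B)) a b = tmean (\<lambda>t. ereal e * (u (circ_pt a b t) + ereal (- B)))"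
    unfolding circle_mean_tmean by (simp add: minus_ereal_def)
  also have "\<dots> = ereal e * tmean (\<lambda>t. u (circ_pt a b t) + ereal (- B))"
    by (rule tmean_scale[OF meas2 _ e]) (use B2 in blast)
  also have "tmean (\<lambda>t. u (circ_pt a b t) + ereal (- B)) = circle_mean u a b + ereal (- B)"
    unfolding circle_mean_tmean by (rule tmean_add_const[OF meas]) (use B1 in blast)
  finally have eq: "circle_mean (\<lambda>x. ereal e * (u x - ereal B)) a b = ereal e * (circle_mean u a b + ereal (- B))" .
  have "u a + ereal (- B) \<le> circle_mean u a b + ereal (- B)" using sm by (rule add_right_mono)
  hence "ereal e * (u a + ereal (- B)) \<le> ereal e * (circle_mean u a b + ereal (- B))"
    using e by (intro ereal_mult_left_mono) auto
  thus ?thesis unfolding eq by (simp add: minus_ereal_def)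
qed

lemma glue:
  fixes u v :: "complex^'n \<Rightarrow> ereal"
  assumes pshu: "psh G u" and D: "open D" "D \<subseteq> G" and U: "open U"
    and N: "open N" "D - U \<subseteq> N"
    and Nb: "\<And>x. x \<in> N \<inter> D \<Longrightarrow> ereal (- Mx) \<le> u x"
    and Bu: "\<And>x. x \<in> D \<Longrightarrow> u x \<le> ereal Bu" and Mx0: "0 \<le> Mx" and Bu0: "0 \<le> Bu"
    and pshv: "psh (U \<inter> D) v" and v0: "\<And>x. x \<in> U \<inter> D \<Longrightarrow> v x \<le> 0"
    and eta: "0 < \<eta>"
  shows "\<exists>w. psh D w \<and> (\<forall>x\<in>D. w x \<le> 0) \<and> (\<forall>x\<in>U\<inter>D. v x - ereal \<eta> \<le> w x)
           \<and> (\<forall>x\<in>U\<inter>D. u x = -\<infinity> \<longrightarrow> w x = v x - ereal \<eta>)"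
proof -
  have uusc: "usc_on G u" and ufin: "\<And>z. z \<in> G \<Longrightarrow> u z < \<infinity>" using pshu unfolding psh_def by auto
  have vusc: "usc_on (U\<inter>D) v" and vfin: "\<And>z. z \<in> U\<inter>D \<Longrightarrow> v z < \<infinity>"
    and vsm: "\<And>a b. (\<forall>\<zeta>::complex. cmod \<zeta> \<le> 1 \<longrightarrow> (\<chi> i. a $ i + \<zeta> * b $ i) \<in> U\<inter>D) \<Longrightarrow> v a \<le> circle_mean v a b"
    using pshv unfolding psh_def by auto
  define \<epsilon> where "\<epsilon> = \<eta> / (2 * (Mx + Bu + 1))"
  have e0: "0 < \<epsilon>" unfolding \<epsilon>_def using eta Mx0 Bu0 by simp
  have eM: "\<epsilon> * (Mx + Bu) \<le> \<eta> / 2"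
  proof -
    have "\<epsilon> * (Mx + Bu) \<le> \<epsilon> * (Mx + Bu + 1)" using e0 by simp
    also have "\<dots> = \<eta> / 2" unfolding \<epsilon>_def using Mx0 Bu0 by (simp add: field_simps)
    finally show ?thesis .
  qed
  define \<psi> where "\<psi> x = ereal \<epsilon> * (u x - ereal Bu)" for x
  have psiN: "ereal (- \<eta>/2) \<le> \<psi> x" if x: "x \<in> N \<inter> D" for x
  proof -
    have "ereal (- Mx) \<le> u x" "u x \<le> ereal Bu" using Nb[OF x] Bu x by auto
    then obtain r where r: "u x = ereal r" "- Mx \<le> r" "r \<le> Bu" by (cases "u x") auto
    have "\<epsilon> * (- Mx) \<le> \<epsilon> * r" using r e0 by (intro mult_left_mono) auto
    hence "- (\<epsilon> * (Mx + Bu)) \<le> \<epsilon> * (r - Bu)" by (simp add: algebra_simps)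
    hence "- \<eta>/2 \<le> \<epsilon> * (r - Bu)" using eM by simp
    thus ?thesis unfolding \<psi>_def using r by simp
  qed
  have psi0: "\<psi> x \<le> 0" if "x \<in> D" for x
  proof -
    have "u x - ereal Bu \<le> 0" using Bu[OF that] by (cases "u x") auto
    thus ?thesis unfolding \<psi>_def using e0 by (simp add: mult_le_0_iff ereal_mult_le_0_iff)
  qed
  have psiZ: "\<psi> x = -\<infinity>" if "u x = -\<infinity>" for x unfolding \<psi>_def using that e0 by simp
  have psifin: "\<psi> x < \<infinity>" if "x \<in> D" for x
    using ufin[of x] that D(2) e0 unfolding \<psi>_def by (cases "u x") auto
  have psiusc: "usc_on D \<psi>" unfolding \<psi>_def
    by (rule usc_affine[OF usc_on_subset[OF uusc D(2)] _ e0]) (use ufin D(2) in blast)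
  have psism: "\<psi> a \<le> circle_mean \<psi> a b" if "\<And>\<zeta>. cmod \<zeta> \<le> 1 \<Longrightarrow> (\<chi> i. a $ i + \<zeta> * b $ i) \<in> D" for a b
    unfolding \<psi>_def by (rule affine_submean[OF pshu _ e0]) (use that D(2) in blast)
  define w where "w x = (if x \<in> U then max (v x - ereal \<eta>) (\<psi> x) else \<psi> x)" for x
  have w_psi: "\<psi> x \<le> w x" for x unfolding w_def by simp
  have w_v: "v x - ereal \<eta> \<le> w x" if "x \<in> U" for x unfolding w_def using that by simp
  have wN: "w x = \<psi> x" if x: "x \<in> N \<inter> D" for x
  proof (cases "x \<in> U")
    case True
    have "v x \<le> 0" using v0 True x by blast
    hence "v x - ereal \<eta> \<le> ereal (- \<eta>/2)" using eta by (cases "v x") auto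
    hence "v x - ereal \<eta> \<le> \<psi> x" using psiN[OF x] by (rule order_trans)
    thus ?thesis unfolding w_def using True by (simp add: max_def)
  next
    case False thus ?thesis unfolding w_def by simp
  qed
  have vmusc: "usc_on (U\<inter>D) (\<lambda>x. v x - ereal \<eta>)"
    by (rule usc_minus_cont[OF vusc vfin]) (use U D(1) in \<open>auto intro: continuous_intros\<close>)
  have gusc: "usc_on (U\<inter>D) (\<lambda>x. max (v x - ereal \<eta>) (\<psi> x))"
    by (rule usc_max2[OF vmusc usc_on_subset[OF psiusc]]) blast
  have wusc: "usc_on D w"
  proof (rule usc_onI)
    fix x c assume x: "x \<in> D" and c: "w x < c"
    show "\<exists>T. open T \<and> x \<in> T \<and> (\<forall>y\<in>T\<inter>D. w y < c)"
    proof (cases "x \<in> U")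
      case True
      have "max (v x - ereal \<eta>) (\<psi> x) < c" using c True unfolding w_def by simp
      then obtain T where T: "open T" "x \<in> T" "\<forall>y\<in>T\<inter>(U\<inter>D). max (v y - ereal \<eta>) (\<psi> y) < c"
        using usc_nbhd[OF gusc _] True x by blast
      have "\<forall>y\<in>(T\<inter>U)\<inter>D. w y < c"
      proof
        fix y assume y: "y \<in> (T\<inter>U)\<inter>D"
        hence "max (v y - ereal \<eta>) (\<psi> y) < c" using T(3) by blast
        thus "w y < c" unfolding w_def using y by simp
      qed
      moreover have "open (T \<inter> U)" using T(1) U by blast
      moreover have "x \<in> T \<inter> U" using T(2) True by blast
      ultimately show ?thesis by blast
    next
      case False
      hence xN: "x \<in> N" using N(2) x by blast
      have "\<psi> x < c" using c False unfolding w_def by simp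
      then obtain T where T: "open T" "x \<in> T" "\<forall>y\<in>T\<inter>D. \<psi> y < c"
        using usc_nbhd[OF psiusc x] by blast
      have "\<forall>y\<in>(T\<inter>N)\<inter>D. w y < c"
      proof
        fix y assume y: "y \<in> (T\<inter>N)\<inter>D"
        hence "\<psi> y < c" using T(3) by blast
        thus "w y < c" using wN[of y] y by simp
      qed
      moreover have "open (T \<inter> N)" using T(1) N(1) by blast
      moreover have "x \<in> T \<inter> N" using T(2) xN by blast
      ultimately show ?thesis by blast
    qed
  qed
  have wfin: "w x < \<infinity>" if x: "x \<in> D" for x
  proof (cases "x \<in> U")
    case True
    have "v x - ereal \<eta> < \<infinity>" using vfin[of x] True x by (cases "v x") auto
    thus ?thesis unfolding w_def using True psifin[OF x] by (simp add: max_def)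
  next
    case False thus ?thesis unfolding w_def using psifin[OF x] by simp
  qed
  have wloc: "\<exists>r>0. \<forall>b. norm b < r \<longrightarrow> w x \<le> circle_mean w x b" if x: "x \<in> D" for x
  proof (cases "x \<in> U")
    case True
    have "open (U \<inter> D)" using U D(1) by blast
    then obtain r where r: "r > 0" "ball x r \<subseteq> U \<inter> D" using True x open_contains_ball by blast
    have "w x \<le> circle_mean w x b" if b: "norm b < r" for b
    proof -
      have disc: "(\<chi> i. x $ i + \<zeta> * b $ i) \<in> U \<inter> D" if "cmod \<zeta> \<le> 1" for \<zeta>
        using disc_in_ball[OF b that] r(2) by blast
      have circ: "circ_pt x b t \<in> U \<inter> D" for t unfolding circ_pt_def by (rule disc) simp
      have "v x - ereal \<eta> \<le> circle_mean (\<lambda>y. v y - ereal \<eta>) x b"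
        by (rule shift_submean[OF pshv disc])
      also have "\<dots> \<le> circle_mean w x b"
        unfolding circle_mean_tmean by (rule tmean_mono) (use circ w_v in blast)
      finally have 1: "v x - ereal \<eta> \<le> circle_mean w x b" .
      have "\<psi> x \<le> circle_mean \<psi> x b" by (rule psism) (use disc in blast)
      also have "\<dots> \<le> circle_mean w x b"
        unfolding circle_mean_tmean by (rule tmean_mono) (use w_psi in blast)
      finally have 2: "\<psi> x \<le> circle_mean w x b" .
      have "w x = max (v x - ereal \<eta>) (\<psi> x)" using True by (simp add: w_def)
      thus ?thesis using 1 2 by simp
    qed
    thus ?thesis using r(1) by blast
  next
    case False
    hence xN: "x \<in> N \<inter> D" using N(2) x by blast
    have "open (N \<inter> D)" using N(1) D(1) by blast
    then obtain r where r: "r > 0" "ball x r \<subseteq> N \<inter> D" using xN open_contains_ball by blast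
    have "w x \<le> circle_mean w x b" if b: "norm b < r" for b
    proof -
      have disc: "(\<chi> i. x $ i + \<zeta> * b $ i) \<in> N \<inter> D" if "cmod \<zeta> \<le> 1" for \<zeta>
        using disc_in_ball[OF b that] r(2) by blast
      have circ: "circ_pt x b t \<in> N \<inter> D" for t unfolding circ_pt_def by (rule disc) simp
      have "\<psi> x \<le> circle_mean \<psi> x b" by (rule psism) (use disc in blast)
      also have "circle_mean \<psi> x b = circle_mean w x b"
        unfolding circle_mean_tmean by (rule tmean_cong) (use circ wN in simp)
      finally show ?thesis using wN[OF xN] by simp
    qed
    thus ?thesis using r(1) by blast
  qed
  have "psh D w" by (rule psh_local[OF D(1) wusc wfin wloc])
  moreover have "\<forall>x\<in>D. w x \<le> 0"
  proof
    fix x assume x: "x \<in> D"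
    show "w x \<le> 0"
    proof (cases "x \<in> U")
      case True
      have "v x \<le> 0" using v0 True x by blast
      hence "v x - ereal \<eta> \<le> 0" using eta by (cases "v x") auto
      thus ?thesis unfolding w_def using True psi0[OF x] by simp
    next
      case False thus ?thesis unfolding w_def using psi0[OF x] by simp
    qed
  qed
  moreover have "\<forall>x\<in>U\<inter>D. v x - ereal \<eta> \<le> w x" using w_v by blast
  moreover have "\<forall>x\<in>U\<inter>D. u x = -\<infinity> \<longrightarrow> w x = v x - ereal \<eta>"
    unfolding w_def using psiZ by auto
  ultimately show ?thesis by blast
qed

lemma ereal_shift_le: "a - ereal e \<le> b \<Longrightarrow> a \<le> b + ereal e"
  by (cases a; cases b) auto

theorem theorem3p6:
  fixes G D U E :: "(complex^'n) set" and u :: "complex^'n \<Rightarrow> ereal"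
  assumes "open G" and "connected G"
    and "E \<subseteq> G" and "pluripolar E"
    and "psh G u"
    and "E \<subseteq> {z\<in>G. u z = -\<infinity>}"
    and "\<forall>z\<in>G - {w\<in>G. u w = -\<infinity>}. \<exists>r>0. \<exists>M::real.
           \<forall>w\<in>ball z r \<inter> (G - {w\<in>G. u w = -\<infinity>}). \<bar>u w\<bar> \<le> ereal M"
    and "open D" and "connected D" and "compact (closure D)" and "closure D \<subseteq> G"
    and "open U" and "{z\<in>G. u z = -\<infinity>} \<subseteq> U"
  shows "\<forall>z\<in>U \<inter> D. rel_extremal z (E \<inter> D) D = rel_extremal z (E \<inter> D) (U \<inter> D)"
proof -
  define Z where "Z = {z\<in>G. u z = -\<infinity>}"
  have uusc: "usc_on G u" and ufin: "\<And>z. z \<in> G \<Longrightarrow> u z < \<infinity>" using assms(5) unfolding psh_def by auto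
  have DG: "D \<subseteq> G" using assms(11) closure_subset by blast
  have ZU: "Z \<subseteq> U" using assms(13) unfolding Z_def .
  show ?thesis
  proof (cases "interior Z = {}")
    case False
    have "\<forall>x\<in>G. u x = -\<infinity>"
      by (rule Zint[OF assms(1,2,5), of "interior Z"]) (use False interior_subset in \<open>auto simp: Z_def\<close>)
    hence "G \<subseteq> Z" unfolding Z_def by blast
    hence "D \<subseteq> U" using DG ZU by blast
    hence "U \<inter> D = D" by blast
    thus ?thesis by simp
  next
    case True
    define K0 where "K0 = closure D - U"
    have K0c: "compact K0" unfolding K0_def by (rule compact_diff[OF assms(10) assms(12)])
    have K0G: "K0 \<subseteq> G - Z" unfolding K0_def using assms(11) ZU by blast
    have locb: "\<exists>r>0. \<exists>M. 0 \<le> M \<and> (\<forall>x\<in>ball p r. x \<in> G \<and> ereal (- M) \<le> u x)" if p: "p \<in> K0" for p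
    proof -
      have pGZ: "p \<in> G - Z" using K0G p by blast
      obtain r1 M1 where r1: "r1 > 0" "\<forall>w\<in>ball p r1 \<inter> (G - Z). \<bar>u w\<bar> \<le> ereal M1"
        using assms(7) pGZ unfolding Z_def by blast
      obtain rG where rG: "rG > 0" "ball p rG \<subseteq> G" using pGZ assms(1) open_contains_ball by blast
      define r where "r = min r1 rG"
      have r0: "r > 0" unfolding r_def using r1 rG by simp
      have "x \<in> G \<and> ereal (- max M1 0) \<le> u x" if x: "x \<in> ball p r" for x
      proof -
        have xG: "x \<in> G" using x rG(2) unfolding r_def by auto
        have xZ: "x \<notin> Z"
        proof
          assume xZ: "x \<in> Z"
          hence "u x < ereal (- M1 - 1)" unfolding Z_def by simp
          then obtain T where T: "open T" "x \<in> T" "\<forall>y\<in>T\<inter>G. u y < ereal (- M1 - 1)"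
            using usc_nbhd[OF uusc xG] by blast
          define V where "V = T \<inter> ball p r"
          have "V \<subseteq> Z"
          proof
            fix y assume y: "y \<in> V"
            have yG: "y \<in> G" using y rG(2) unfolding V_def r_def by auto
            have uy: "u y < ereal (- M1 - 1)" using T(3) y yG unfolding V_def by blast
            show "y \<in> Z"
            proof (rule ccontr)
              assume "y \<notin> Z"
              hence "\<bar>u y\<bar> \<le> ereal M1" using r1(2) y yG unfolding V_def r_def by auto
              thus False using uy by (cases "u y") auto
            qed
          qed
          moreover have "open V" unfolding V_def using T(1) by blast
          moreover have "x \<in> V" unfolding V_def using T(2) x by blast
          ultimately have "x \<in> interior Z" by (meson interior_maximal subsetD)
          thus False using True by blast
        qed
        have "\<bar>u x\<bar> \<le> ereal M1" using r1(2) x xG xZ unfolding r_def by auto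
        hence "ereal (- M1) \<le> u x" by (cases "u x") auto
        hence "ereal (- max M1 0) \<le> u x" by (rule order_trans[rotated]) simp
        thus ?thesis using xG by blast
      qed
      thus ?thesis using r0 by (intro exI[of _ r] conjI exI[of _ "max M1 0"]) auto
    qed
    hence "\<forall>p\<in>K0. \<exists>r. r > 0 \<and> (\<exists>M. 0 \<le> M \<and> (\<forall>x\<in>ball p r. x \<in> G \<and> ereal (- M) \<le> u x))" by blast
    from bchoice[OF this] obtain rr where rr: "\<forall>p\<in>K0. rr p > 0 \<and> (\<exists>M. 0 \<le> M \<and> (\<forall>x\<in>ball p (rr p). x \<in> G \<and> ereal (- M) \<le> u x))"
      by blast
    hence "\<forall>p\<in>K0. \<exists>M. 0 \<le> M \<and> (\<forall>x\<in>ball p (rr p). x \<in> G \<and> ereal (- M) \<le> u x)" by blast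
    from bchoice[OF this] obtain MM where MM: "\<forall>p\<in>K0. 0 \<le> MM p \<and> (\<forall>x\<in>ball p (rr p). x \<in> G \<and> ereal (- MM p) \<le> u x)"
      by blast
    have rrMM: "\<forall>p\<in>K0. rr p > 0 \<and> 0 \<le> MM p \<and> (\<forall>x\<in>ball p (rr p). x \<in> G \<and> ereal (- MM p) \<le> u x)"
      using rr MM by blast
    have oc: "\<And>p. p \<in> K0 \<Longrightarrow> open (ball p (rr p))" by simp
    have cv: "K0 \<subseteq> \<Union> ((\<lambda>p. ball p (rr p)) ` K0)"
    proof
      fix p assume p: "p \<in> K0"
      hence "p \<in> ball p (rr p)" using rrMM by simp
      thus "p \<in> \<Union> ((\<lambda>p. ball p (rr p)) ` K0)" using p by blast
    qed
    obtain F where F: "F \<subseteq> K0" "finite F" "K0 \<subseteq> \<Union> ((\<lambda>p. ball p (rr p)) ` F)"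
      using compactE_image[OF K0c oc cv] by blast
    define N where "N = \<Union> ((\<lambda>p. ball p (rr p)) ` F)"
    define Mx where "Mx = (\<Sum>p\<in>F. MM p)"
    have Mx0: "0 \<le> Mx" unfolding Mx_def using F rrMM by (intro sum_nonneg) blast
    have No: "open N" unfolding N_def by blast
    have DUN: "D - U \<subseteq> N" unfolding N_def using F(3) closure_subset unfolding K0_def by blast
    have Nb: "ereal (- Mx) \<le> u x" if x: "x \<in> N \<inter> D" for x
    proof -
      obtain p where p: "p \<in> F" "x \<in> ball p (rr p)" using x unfolding N_def by blast
      have pK: "p \<in> K0" using p F by blast
      have "ereal (- MM p) \<le> u x" using rrMM pK p by blast
      moreover have "MM p \<le> Mx" unfolding Mx_def using F(2) p(1) rrMM F(1) by (intro member_le_sum) auto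
      ultimately show ?thesis by (metis ereal_less_eq(3) neg_le_iff_le order_trans)
    qed
    obtain B1 where B1: "\<forall>x\<in>closure D. u x \<le> ereal B1"
      using usc_bdd[OF uusc assms(10) assms(11)] ufin assms(11) by blast
    define Bu where "Bu = max B1 0"
    have Bu0: "0 \<le> Bu" unfolding Bu_def by simp
    have Bu: "u x \<le> ereal Bu" if "x \<in> D" for x
      using B1 that closure_subset unfolding Bu_def by (metis le_ereal_trans max.cobounded1 subsetD)
    show ?thesis
    proof
      fix z0 assume z0: "z0 \<in> U \<inter> D"
      define S1 where "S1 = {v. psh D v \<and> (\<forall>x\<in>E \<inter> D. v x \<le> -1) \<and> (\<forall>x\<in>D. v x \<le> 0)}"
      define S2 where "S2 = {v. psh (U \<inter> D) v \<and> (\<forall>x\<in>E \<inter> D. v x \<le> -1) \<and> (\<forall>x\<in>U \<inter> D. v x \<le> 0)}"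
      have UDo: "open (U \<inter> D)" using assms(8,12) by blast
      have "S1 \<subseteq> S2"
      proof
        fix v assume "v \<in> S1"
        hence "psh D v" "\<forall>x\<in>E \<inter> D. v x \<le> -1" "\<forall>x\<in>D. v x \<le> 0" unfolding S1_def by auto
        moreover have "psh (U \<inter> D) v" by (rule psh_restrict[OF \<open>psh D v\<close> UDo]) blast
        ultimately show "v \<in> S2" unfolding S2_def by blast
      qed
      hence le1: "(SUP v\<in>S1. v z0) \<le> (SUP v\<in>S2. v z0)" by (rule SUP_subset_mono) simp
      have le2: "(SUP v\<in>S2. v z0) \<le> (SUP v\<in>S1. v z0)"
      proof (rule SUP_least)
        fix v assume v: "v \<in> S2"
        show "v z0 \<le> (SUP v\<in>S1. v z0)"
        proof (rule ereal_le_epsilon2)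
          fix \<eta> :: real assume eta: "0 < \<eta>"
          have pshv: "psh (U \<inter> D) v" and vE: "\<forall>x\<in>E \<inter> D. v x \<le> -1" and v0: "\<And>x. x \<in> U \<inter> D \<Longrightarrow> v x \<le> 0"
            using v unfolding S2_def by auto
          obtain w where w: "psh D w" "\<forall>x\<in>D. w x \<le> 0" "\<forall>x\<in>U\<inter>D. v x - ereal \<eta> \<le> w x"
              "\<forall>x\<in>U\<inter>D. u x = -\<infinity> \<longrightarrow> w x = v x - ereal \<eta>"
            using glue[OF assms(5) assms(8) DG assms(12) No DUN Nb Bu Mx0 Bu0 pshv v0 eta] by blast
          have "\<forall>x\<in>E \<inter> D. w x \<le> -1"
          proof
            fix x assume x: "x \<in> E \<inter> D"
            have "x \<in> Z" using x assms(6) unfolding Z_def by blast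
            hence "x \<in> U" "u x = -\<infinity>" using ZU unfolding Z_def by auto
            hence "w x = v x - ereal \<eta>" using w(4) x by blast
            moreover have "v x \<le> -1" using vE x by blast
            ultimately show "w x \<le> -1" using eta by (cases "v x") (auto simp: one_ereal_def)
          qed
          hence "w \<in> S1" unfolding S1_def using w(1,2) by blast
          hence "w z0 \<le> (SUP v\<in>S1. v z0)" by (rule SUP_upper)
          hence "v z0 - ereal \<eta> \<le> (SUP v\<in>S1. v z0)" using w(3) z0 by (meson order_trans)
          thus "v z0 \<le> (SUP v\<in>S1. v z0) + ereal \<eta>" by (rule ereal_shift_le)
        qed
      qed
      have "(SUP v\<in>S1. v z0) = (SUP v\<in>S2. v z0)" using le1 le2 by (rule antisym)
      thus "rel_extremal z0 (E \<inter> D) D = rel_extremal z0 (E \<inter> D) (U \<inter> D)"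
        unfolding rel_extremal_def S1_def S2_def by simp
    qed
  qed
qed

end
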